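(* Let $(\mathsf X_n,\mathrm d_n)_{n\in\mathbb N}$ be finite metric spaces with $|\mathsf X_n|=n$, all $(C,\delta)$-finite-Ahlfors regular for fixed constants $0<C<\infty$, $1\le\delta\le\infty$. Assume there is a constant $K$ independent of $n$ such that for each $n$: (1) $\mathsf X_n$ is $K$-coarsely isometric to a subset of a Euclidean space of dimension $\nu$ independent of $n$; and (2) for any two points $i,j\in\mathsf X_n$ and any $a\in[0,1]$ there is an interpolant $g\in\mathsf X_n$ with $|\mathrm d_n(i,g)-a\,\mathrm d_n(i,j)|\le K$ and $|\mathrm d_n(g,j)-(1-a)\,\mathrm d_n(i,j)|\le K$. Fix an integer $k\ge2$ and let $\mathcal C_n$ be a partition of $\mathsf X_n$ returned by the $k$-medoids algorithm applied to $(\mathsf X_n,\mathrm d_n)$. Then the sequence $(\mathcal C_n)_{n\in\mathbb N}$ satisfies: (i) $\liminf_{n\to\infty}\min_{\mathsf C\in\mathcal C_n}|\mathsf C|/\max_{\mathsf D\in\mathcal C_n}|\mathsf D|>0$; and (ii) there is a sequence $\bar r_n\nearrow\infty$ with $\lim_{n\to\infty}\max_{\mathsf C\in\mathcal C_n}|\{i\in\mathsf C:\mathrm d_n(i,\mathsf X_n\setminus\mathsf C)\le\bar r_n\}|/\min_{\mathsf D\in\mathcal C_n}|\mathsf D|=0$.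
   Context: A finite metric space $(\mathsf X,\mathrm d)$ is $(C,\delta)$-finite-Ahlfors regular if for every $i\in\mathsf X$ and $r>0$, $\min(|\mathsf X|,C^{-1}r^\delta)\le|\mathsf B_{\mathsf X,r}(i)|\le\max(Cr^\delta,1)$, with $\mathsf B_{\mathsf X,r}(i)$ the ball of radius $r$ about $i$. A map $f:(\mathsf Y,\mathrm d_{\mathsf Y})\to(\mathsf Z,\mathrm d_{\mathsf Z})$ is a $K$-coarse isometry if $\mathrm d_{\mathsf Z}(f(i),f(j))-K\le\mathrm d_{\mathsf Y}(i,j)\le\mathrm d_{\mathsf Z}(f(i),f(j))+K$ for all $i,j$. The $k$-medoids algorithm on a finite metric space $(\mathsf X,\mathrm d)$: for medoids $i_1,\dots,i_k\in\mathsf X$, each point is assigned to a cluster of a nearest medoid; the total cost is $\sum_{g}\sum_{j\in\mathsf C_g}\mathrm d(i_g,j)^2$. Initialize medoids arbitrarily; while the total cost decreases, for each $g\le k$ and each non-medoid $j$, compute the cost with medoid set $\{i_1,\dots,i_{g-1},j,i_{g+1},\dots,i_k\}$ and update to the new medoids if the total cost decreases. The output is the resulting partition into $k$ clusters. *)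

theory Defs
  imports "HOL-Analysis.Analysis" "HOL-Library.Extended_Real" "HOL-Library.Liminf_Limsup"
begin

text \<open>A finite metric space with n points is modelled on the carrier {..<n} of naturals.\<close>

definition fin_metric :: "nat set \<Rightarrow> (nat \<Rightarrow> nat \<Rightarrow> real) \<Rightarrow> bool" where
  "fin_metric X d \<longleftrightarrow> finite X \<and>
     (\<forall>i\<in>X. \<forall>j\<in>X. d i j = 0 \<longleftrightarrow> i = j) \<and>
     (\<forall>i\<in>X. \<forall>j\<in>X. d i j = d j i) \<and>
     (\<forall>i\<in>X. \<forall>j\<in>X. \<forall>l\<in>X. d i l \<le> d i j + d j l)"

definition mball :: "nat set \<Rightarrow> (nat \<Rightarrow> nat \<Rightarrow> real) \<Rightarrow> real \<Rightarrow> nat \<Rightarrow> nat set" where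
  "mball X d r i = {j\<in>X. d i j \<le> r}"

definition epow :: "real \<Rightarrow> ereal \<Rightarrow> ereal" where
  "epow r \<delta> = (case \<delta> of ereal e \<Rightarrow> ereal (r powr e)
      | PInfty \<Rightarrow> (if r > 1 then \<infinity> else if r = 1 then 1 else 0)
      | MInfty \<Rightarrow> 0)"

definition fin_ahlfors_regular ::
  "nat set \<Rightarrow> (nat \<Rightarrow> nat \<Rightarrow> real) \<Rightarrow> real \<Rightarrow> ereal \<Rightarrow> bool" where
  "fin_ahlfors_regular X d C \<delta> \<longleftrightarrow>
     (\<forall>i\<in>X. \<forall>r>0.
        min (ereal (real (card X))) (ereal (inverse C) * epow r \<delta>)
          \<le> ereal (real (card (mball X d r i))) \<and>
        ereal (real (card (mball X d r i))) \<le> max (ereal C * epow r \<delta>) 1)"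

definition coarse_isometry ::
  "nat set \<Rightarrow> (nat \<Rightarrow> nat \<Rightarrow> real) \<Rightarrow> ('b \<Rightarrow> 'b \<Rightarrow> real) \<Rightarrow> real \<Rightarrow> (nat \<Rightarrow> 'b) \<Rightarrow> bool" where
  "coarse_isometry Y dY dZ K f \<longleftrightarrow>
     (\<forall>i\<in>Y. \<forall>j\<in>Y. dZ (f i) (f j) - K \<le> dY i j \<and> dY i j \<le> dZ (f i) (f j) + K)"

text \<open>k-medoids. Medoids are a list ms (ms ! g is the medoid of cluster g).\<close>

definition nearest_assignment ::
  "(nat \<Rightarrow> nat \<Rightarrow> real) \<Rightarrow> nat set \<Rightarrow> nat list \<Rightarrow> (nat \<Rightarrow> nat set) \<Rightarrow> bool" where
  "nearest_assignment d X ms Cl \<longleftrightarrow>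
     (\<forall>g<length ms. Cl g \<subseteq> X) \<and>
     (\<forall>j\<in>X. \<exists>!g. g < length ms \<and> j \<in> Cl g) \<and>
     (\<forall>g<length ms. \<forall>j\<in>Cl g. \<forall>h<length ms. d (ms ! g) j \<le> d (ms ! h) j)"

definition kmedoids_cost :: "(nat \<Rightarrow> nat \<Rightarrow> real) \<Rightarrow> nat set \<Rightarrow> nat list \<Rightarrow> real" where
  "kmedoids_cost d X ms =
     (let Cl = (SOME Cl. nearest_assignment d X ms Cl)
      in (\<Sum>g<length ms. \<Sum>j\<in>Cl g. (d (ms ! g) j)^2))"

definition kmedoids_swap :: "(nat \<Rightarrow> nat \<Rightarrow> real) \<Rightarrow> nat set \<Rightarrow> nat list \<Rightarrow> nat list \<Rightarrow> bool" where
  "kmedoids_swap d X ms ms' \<longleftrightarrow>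
     (\<exists>g<length ms. \<exists>j\<in>X. j \<notin> set ms \<and> ms' = ms[g := j] \<and>
        kmedoids_cost d X ms' < kmedoids_cost d X ms)"

definition kmedoids_output :: "(nat \<Rightarrow> nat \<Rightarrow> real) \<Rightarrow> nat set \<Rightarrow> nat \<Rightarrow> (nat \<Rightarrow> nat set) \<Rightarrow> bool" where
  "kmedoids_output d X k Cl \<longleftrightarrow>
     (\<exists>ms0 ms. length ms0 = k \<and> distinct ms0 \<and> set ms0 \<subseteq> X \<and>
        (kmedoids_swap d X)\<^sup>*\<^sup>* ms0 ms \<and> \<not> (\<exists>ms'. kmedoids_swap d X ms ms') \<and>
        nearest_assignment d X ms Cl)"

definition setdist :: "(nat \<Rightarrow> nat \<Rightarrow> real) \<Rightarrow> nat \<Rightarrow> nat set \<Rightarrow> real" where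
  "setdist d i S = (INF j\<in>S. d i j)"

end

theory Submission
  imports Defs
begin

definition mcost :: "(nat \<Rightarrow> nat \<Rightarrow> real) \<Rightarrow> nat list \<Rightarrow> nat \<Rightarrow> real" where
  "mcost d ms j = (Min ((\<lambda>g. d (ms ! g) j) ` {..<length ms}))^2"

lemma nearest_exists:
  assumes "ms \<noteq> []"
  shows "\<exists>Cl. nearest_assignment d X ms Cl"
proof -
  define P where "P j g \<longleftrightarrow> g < length ms \<and> (\<forall>h<length ms. d (ms ! g) j \<le> d (ms ! h) j)" for j g
  have ex: "\<exists>g. P j g" for j
  proof -
    have "finite ((\<lambda>g. d (ms ! g) j) ` {..<length ms})" "(\<lambda>g. d (ms ! g) j) ` {..<length ms} \<noteq> {}"
      using assms by auto
    then have "Min ((\<lambda>g. d (ms ! g) j) ` {..<length ms}) \<in> (\<lambda>g. d (ms ! g) j) ` {..<length ms}"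
      by (rule Min_in)
    then obtain g where g: "g < length ms" "d (ms ! g) j = Min ((\<lambda>g. d (ms ! g) j) ` {..<length ms})" by auto
    then show ?thesis unfolding P_def by (intro exI[of _ g]) auto
  qed
  define Cl where "Cl g = {j\<in>X. g = (LEAST g. P j g)}" for g
  have L: "P j (LEAST g. P j g)" for j using ex by (meson LeastI_ex)
  have "nearest_assignment d X ms Cl"
    unfolding nearest_assignment_def
  proof (intro conjI allI impI ballI)
    show "Cl g \<subseteq> X" for g unfolding Cl_def by auto
    show "\<exists>!g. g < length ms \<and> j \<in> Cl g" if "j \<in> X" for j
      using L[of j] that unfolding Cl_def P_def by auto
    show "d (ms ! g) j \<le> d (ms ! h) j" if "g < length ms" "j \<in> Cl g" "h < length ms" for g j h
      using L[of j] that unfolding Cl_def P_def by auto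
  qed
  then show ?thesis by blast
qed

lemma nearest_mcost:
  assumes "nearest_assignment d X ms Cl" "g < length ms" "j \<in> Cl g"
  shows "mcost d ms j = (d (ms ! g) j)^2"
proof -
  have "Min ((\<lambda>g. d (ms ! g) j) ` {..<length ms}) = d (ms ! g) j"
    using assms unfolding nearest_assignment_def
    by (intro Min_eqI) auto
  then show ?thesis unfolding mcost_def by simp
qed

lemma mcost_le:
  assumes "g < length ms" "\<forall>h<length ms. d (ms ! h) j \<ge> 0"
  shows "mcost d ms j \<le> (d (ms ! g) j)^2"
proof -
  have "Min ((\<lambda>g. d (ms ! g) j) ` {..<length ms}) \<le> d (ms ! g) j"
    using assms by (intro Min_le) auto
  moreover have "0 \<le> Min ((\<lambda>g. d (ms ! g) j) ` {..<length ms})"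
    using assms by (subst Min_ge_iff) auto
  ultimately show ?thesis unfolding mcost_def by (simp add: power_mono)
qed

lemma cost_sum_eq:
  assumes "nearest_assignment d X ms Cl" "finite X"
  shows "(\<Sum>g<length ms. \<Sum>j\<in>Cl g. (d (ms ! g) j)^2) = (\<Sum>j\<in>X. mcost d ms j)"
proof -
  have fin: "finite (Cl g)" if "g < length ms" for g
    using assms that unfolding nearest_assignment_def by (meson finite_subset)
  have "(\<Sum>g<length ms. \<Sum>j\<in>Cl g. (d (ms ! g) j)^2) = (\<Sum>g<length ms. \<Sum>j\<in>Cl g. mcost d ms j)"
    using nearest_mcost[OF assms(1)] by (intro sum.cong) auto
  also have "\<dots> = (\<Sum>j\<in>(\<Union>g<length ms. Cl g). mcost d ms j)"
  proof (rule sum.UNION_disjoint[symmetric])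
    show "finite {..<length ms}" by simp
    show "\<forall>i\<in>{..<length ms}. finite (Cl i)" using fin by simp
    show "\<forall>i\<in>{..<length ms}. \<forall>j\<in>{..<length ms}. i \<noteq> j \<longrightarrow> Cl i \<inter> Cl j = {}"
      using assms(1) unfolding nearest_assignment_def by (auto simp: disjoint_iff) (metis subsetD)
  qed
  also have "(\<Union>g<length ms. Cl g) = X"
    using assms(1) unfolding nearest_assignment_def by blast
  finally show ?thesis .
qed

lemma cost_eq:
  assumes "ms \<noteq> []" "finite X"
  shows "kmedoids_cost d X ms = (\<Sum>j\<in>X. mcost d ms j)"
proof -
  have "nearest_assignment d X ms (SOME Cl. nearest_assignment d X ms Cl)"
    using nearest_exists[OF assms(1)] by (rule someI_ex)
  then show ?thesis unfolding kmedoids_cost_def Let_def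
    using cost_sum_eq assms(2) by blast
qed

lemma swap_inv:
  assumes "(kmedoids_swap d X)\<^sup>*\<^sup>* ms0 ms" "distinct ms0" "set ms0 \<subseteq> X"
  shows "distinct ms \<and> set ms \<subseteq> X \<and> length ms = length ms0"
  using assms
proof (induction rule: rtranclp_induct)
  case base
  then show ?case by simp
next
  case (step y z)
  then obtain g j where gj: "g < length y" "j \<in> X" "j \<notin> set y" "z = y[g := j]"
    unfolding kmedoids_swap_def by blast
  have "distinct z" using step gj by (simp add: distinct_list_update)
  moreover have "set z \<subseteq> X" using step gj by (metis insert_subset set_update_subset_insert subset_trans)
  ultimately show ?case using gj step by simp
qed

lemma output_props:
  assumes "kmedoids_output d X k Cl" "finite X" "k \<ge> 1"
  shows "\<exists>ms. length ms = k \<and> distinct ms \<and> set ms \<subseteq> X \<and> nearest_assignment d X ms Cl \<and>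
     (\<forall>g<k. \<forall>p\<in>X. p \<notin> set ms \<longrightarrow> (\<Sum>j\<in>X. mcost d ms j) \<le> (\<Sum>j\<in>X. mcost d (ms[g:=p]) j))"
proof -
  obtain ms0 ms where h: "length ms0 = k" "distinct ms0" "set ms0 \<subseteq> X"
    "(kmedoids_swap d X)\<^sup>*\<^sup>* ms0 ms" "\<not> (\<exists>ms'. kmedoids_swap d X ms ms')" "nearest_assignment d X ms Cl"
    using assms(1) unfolding kmedoids_output_def by blast
  have inv: "distinct ms" "set ms \<subseteq> X" "length ms = k" using swap_inv[OF h(4) h(2) h(3)] h(1) by auto
  have ne: "ms \<noteq> []" using inv assms(3) by auto
  have "(\<Sum>j\<in>X. mcost d ms j) \<le> (\<Sum>j\<in>X. mcost d (ms[g:=p]) j)"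
    if "g < k" "p \<in> X" "p \<notin> set ms" for g p
  proof -
    have ne2: "ms[g:=p] \<noteq> []" using ne by simp
    have "\<not> kmedoids_cost d X (ms[g := p]) < kmedoids_cost d X ms"
      using h(5) that inv unfolding kmedoids_swap_def by blast
    then show ?thesis using cost_eq[OF ne assms(2)] cost_eq[OF ne2 assms(2)] by simp
  qed
  then show ?thesis using inv h(6) by blast
qed

lemma powr_inv_e: "x > 0 \<Longrightarrow> e > 0 \<Longrightarrow> (x powr (1/e)) powr e = (x::real)"
  by (simp add: powr_powr)

lemma powr_inv_sq: "x > 0 \<Longrightarrow> (x powr (1/e))^2 = (x::real) powr (2/e)"
  by (simp add: powr_power)

locale km =
  fixes d :: "nat \<Rightarrow> nat \<Rightarrow> real" and n :: nat and C e :: real and k :: nat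
    and ms :: "nat list" and Cl :: "nat \<Rightarrow> nat set"
  assumes metric: "fin_metric {..<n} d"
  and lo: "\<And>i r. i < n \<Longrightarrow> r > 0 \<Longrightarrow> min (real n) (r powr e / C) \<le> card (mball {..<n} d r i)"
  and hi: "\<And>i r. i < n \<Longrightarrow> r > 0 \<Longrightarrow> card (mball {..<n} d r i) \<le> max (C * r powr e) 1"
  and e1: "e \<ge> 1" and Cpos: "C > 0" and k2: "k \<ge> 2"
  and len: "length ms = k" and dist: "distinct ms" and msX: "set ms \<subseteq> {..<n}"
  and near: "nearest_assignment d {..<n} ms Cl"
  and opt: "\<And>g p. g < k \<Longrightarrow> p < n \<Longrightarrow> p \<notin> set ms \<Longrightarrow>
      (\<Sum>j<n. mcost d ms j) \<le> (\<Sum>j<n. mcost d (ms[g:=p]) j)"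
begin

lemma d_refl: "i < n \<Longrightarrow> d i i = 0"
  using metric unfolding fin_metric_def by auto
lemma d_sym: "i < n \<Longrightarrow> j < n \<Longrightarrow> d i j = d j i"
  using metric unfolding fin_metric_def by auto
lemma d_tri: "i < n \<Longrightarrow> j < n \<Longrightarrow> l < n \<Longrightarrow> d i l \<le> d i j + d j l"
  using metric unfolding fin_metric_def by auto
lemma d_nonneg: "i < n \<Longrightarrow> j < n \<Longrightarrow> d i j \<ge> 0"
  using d_tri[of i j i] d_refl[of i] d_sym[of i j] by auto
lemma d_zero: "i < n \<Longrightarrow> j < n \<Longrightarrow> d i j = 0 \<Longrightarrow> i = j"
  using metric unfolding fin_metric_def by auto

lemma n_ge_k: "k \<le> n"
proof -
  have "card (set ms) = k" using dist len by (simp add: distinct_card)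
  moreover have "card (set ms) \<le> card {..<n}" using msX by (intro card_mono) auto
  ultimately show ?thesis by simp
qed

lemma ms_lt: "g < k \<Longrightarrow> ms ! g < n"
  using msX len by (metis lessThan_iff nth_mem subsetD)

lemma Cl_sub: "g < k \<Longrightarrow> Cl g \<subseteq> {..<n}"
  using near len unfolding nearest_assignment_def by auto
lemma Cl_fin: "g < k \<Longrightarrow> finite (Cl g)"
  using Cl_sub finite_subset by blast
lemma own: "j < n \<Longrightarrow> \<exists>!g. g < k \<and> j \<in> Cl g"
  using near len unfolding nearest_assignment_def by auto
lemma near_le: "g < k \<Longrightarrow> j \<in> Cl g \<Longrightarrow> h < k \<Longrightarrow> d (ms ! g) j \<le> d (ms ! h) j"
  using near len unfolding nearest_assignment_def by auto
lemma Cl_disj: "g < k \<Longrightarrow> h < k \<Longrightarrow> j \<in> Cl g \<Longrightarrow> j \<in> Cl h \<Longrightarrow> g = h"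
  using own Cl_sub by blast

lemma medoid_in: assumes "g < k" shows "ms ! g \<in> Cl g"
proof -
  obtain h where h: "h < k" "ms ! g \<in> Cl h" using own[OF ms_lt[OF assms]] by blast
  have "d (ms ! h) (ms ! g) \<le> d (ms ! g) (ms ! g)" using near_le[OF h(1) h(2) assms] .
  then have "d (ms ! h) (ms ! g) = 0" using d_refl d_nonneg ms_lt assms h(1) by (metis order_antisym)
  then have "ms ! h = ms ! g" using d_zero ms_lt assms h(1) by blast
  then have "h = g" using dist len assms h(1) by (simp add: nth_eq_iff_index_eq)
  then show ?thesis using h by simp
qed

lemma mcost_eq: "g < k \<Longrightarrow> j \<in> Cl g \<Longrightarrow> mcost d ms j = (d (ms ! g) j)^2"
  using nearest_mcost[OF near] len by simp

definition Dm where "Dm = (C * n) powr (1/e)"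

lemma diam: assumes "i < n" "j < n" shows "d i j \<le> Dm"
proof -
  have pos: "C * n > 0" using assms(1) Cpos by (intro mult_pos_pos) auto
  have r: "Dm > 0" unfolding Dm_def using pos by (metis powr_gt_zero order_less_irrefl)
  have "Dm powr e = C * n" unfolding Dm_def using pos e1 by (intro powr_inv_e) auto
  then have "Dm powr e / C = n" using Cpos by simp
  then have "real n \<le> card (mball {..<n} d Dm i)" using lo[OF assms(1) r] by simp
  moreover have "mball {..<n} d Dm i \<subseteq> {..<n}" unfolding mball_def by auto
  ultimately have "mball {..<n} d Dm i = {..<n}"
    by (intro card_seteq) auto
  then show ?thesis using assms unfolding mball_def by auto
qed

lemma Dm_pos: "n > 0 \<Longrightarrow> Dm > 0" unfolding Dm_def using Cpos by simp

lemma big_cluster: "\<exists>h<k. real n \<le> k * card (Cl h)"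
proof -
  have sub: "{..<n} \<subseteq> (\<Union>g<k. Cl g)" using own by blast
  have fin: "finite (\<Union>g<k. Cl g)" using Cl_fin by blast
  have "card {..<n} \<le> card (\<Union>g<k. Cl g)" by (rule card_mono[OF fin sub])
  also have "\<dots> \<le> (\<Sum>g<k. card (Cl g))" by (rule card_UN_le) simp
  finally have le: "n \<le> (\<Sum>g<k. card (Cl g))" by simp
  have "0 \<in> {..<k}" using k2 by simp
  then have ne: "(\<lambda>g. card (Cl g)) ` {..<k} \<noteq> {}" by blast
  have "Max ((\<lambda>g. card (Cl g)) ` {..<k}) \<in> (\<lambda>g. card (Cl g)) ` {..<k}"
    using ne by (intro Max_in) auto
  then obtain h where h: "h < k" "card (Cl h) = Max ((\<lambda>g. card (Cl g)) ` {..<k})"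
    by auto
  have "(\<Sum>g<k. card (Cl g)) \<le> (\<Sum>g<k. card (Cl h))"
    using h by (intro sum_mono) auto
  then have "n \<le> k * card (Cl h)" using le by simp
  then have "real n \<le> real (k * card (Cl h))" by (simp only: of_nat_le_iff)
  then show ?thesis using h(1) by (intro exI[of _ h]) simp
qed

end

lemma min_mult_nonneg: assumes "(x::real) \<ge> 0" shows "min x (x * q) = x * min 1 q"
proof (cases "q \<le> 1")
  case True
  then have "x * q \<le> x" using assms by (simp add: mult_left_le)
  then show ?thesis using True by (simp add: min_def)
next
  case False
  then have "x \<le> x * q" using assms mult_left_mono[of 1 q x] by simp
  then show ?thesis using False by (simp add: min_def)
qed

lemma sum_indicator_card: "finite A \<Longrightarrow> (\<Sum>p\<in>A. (if Q p then 1 else 0::real)) = real (card {p\<in>A. Q p})"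
proof -
  assume "finite A"
  moreover have "A \<inter> Collect Q = {p\<in>A. Q p}" by blast
  ultimately show ?thesis by (simp add: sum.If_cases)
qed

definition amin :: "real \<Rightarrow> real \<Rightarrow> real \<Rightarrow> real" where "amin C e \<beta> = min 1 (\<beta> / (2 powr (e+1) * C^2))"

definition cgain :: "real \<Rightarrow> real \<Rightarrow> real \<Rightarrow> real" where
  "cgain C e \<beta> = 3/16 * \<beta> * amin C e \<beta> * (\<beta>/(2*C)) powr (2/e)"

lemma amin_le1: "amin C e \<beta> \<le> 1" unfolding amin_def by simp
lemma amin_pos: "\<beta> > 0 \<Longrightarrow> C > 0 \<Longrightarrow> amin C e \<beta> > 0" unfolding amin_def by simp
lemma cgain_pos: "\<beta> > 0 \<Longrightarrow> C > 0 \<Longrightarrow> cgain C e \<beta> > 0" unfolding cgain_def using amin_pos by simp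

context km begin

lemma gain:
  fixes \<beta> :: real and alt :: "nat \<Rightarrow> nat"
  assumes gh: "g < k" "h < k" "g \<noteq> h" and \<beta>: "\<beta> > 0" and big: "\<beta> * n \<le> card (Cl h)"
    and alt: "\<And>j. j \<in> Cl g \<Longrightarrow> alt j < k \<and> alt j \<noteq> g"
    and n1: "1 \<le> \<beta> * n / 2" and n2: "2 * k \<le> n * amin C e \<beta>"
  shows "3/16 * \<beta> * amin C e \<beta> * n * (\<beta> * n / (2*C)) powr (2/e)
          \<le> (\<Sum>j\<in>Cl g. (d (ms ! alt j) j)^2 - (d (ms ! g) j)^2)"
proof -
  define \<rho> where "\<rho> = (\<beta>*n/(2*C)) powr (1/e)"
  have npos: "n > 0" using n1 \<beta> by (cases n) auto
  have bp: "\<beta>*n/(2*C) > 0" using \<beta> npos Cpos by simp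
  have \<rho>pos: "\<rho> > 0" unfolding \<rho>_def using bp by (metis powr_gt_zero order_less_irrefl)
  have \<rho>e: "\<rho> powr e = \<beta>*n/(2*C)" unfolding \<rho>_def using bp e1 by (intro powr_inv_e) auto
  have \<rho>sq: "\<rho>^2 = (\<beta>*n/(2*C)) powr (2/e)" unfolding \<rho>_def using bp by (rule powr_inv_sq)
  define t where "t = \<rho>/2"
  have tpos: "t > 0" unfolding t_def using \<rho>pos by simp
  have "t powr e = \<rho> powr e / 2 powr e" unfolding t_def using \<rho>pos by (simp add: powr_divide)
  moreover have "2 powr (e+1) = 2 * 2 powr e" by (simp add: powr_add)
  ultimately have te: "t powr e / C = n * (\<beta> / (2 powr (e+1) * C^2))"
    using \<rho>e Cpos by (simp add: field_simps power2_eq_square)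
  have tball: "n * amin C e \<beta> \<le> card (mball {..<n} d t j)" if "j < n" for j
  proof -
    have "min (real n) (t powr e / C) \<le> card (mball {..<n} d t j)" using lo[OF that tpos] .
    also have "min (real n) (t powr e / C) = n * amin C e \<beta>"
      unfolding te amin_def by (rule min_mult_nonneg) simp
    finally show ?thesis .
  qed
  have hball: "card (mball {..<n} d \<rho> (ms!h)) \<le> \<beta>*n/2"
  proof -
    have "card (mball {..<n} d \<rho> (ms!h)) \<le> max (C * \<rho> powr e) 1" using hi[OF ms_lt[OF gh(2)] \<rho>pos] .
    also have "C * \<rho> powr e = \<beta>*n/2" using \<rho>e Cpos by simp
    finally show ?thesis using n1 by simp
  qed
  define F where "F = {j\<in>Cl h. \<rho> < d (ms!h) j}"
  have Fsub: "F \<subseteq> Cl h" unfolding F_def by auto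
  have finF: "finite F" using Cl_fin[OF gh(2)] Fsub finite_subset by blast
  have F_card: "\<beta>*n/2 \<le> card F"
  proof -
    have "Cl h \<subseteq> F \<union> mball {..<n} d \<rho> (ms!h)"
      using Cl_sub[OF gh(2)] unfolding F_def mball_def by auto
    then have "card (Cl h) \<le> card (F \<union> mball {..<n} d \<rho> (ms!h))"
      by (intro card_mono) (auto simp: finF mball_def)
    also have "\<dots> \<le> card F + card (mball {..<n} d \<rho> (ms!h))" by (rule card_Un_le)
    finally have "real (card (Cl h)) \<le> card F + card (mball {..<n} d \<rho> (ms!h))" by linarith
    then show ?thesis using hball big by linarith
  qed
  define P where "P = {..<n} - set ms"
  have finP: "finite P" unfolding P_def by simp
  define I where "I p j = (if d p j \<le> t then 1 else 0::real)" for p j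
  have kn: "2 * k \<le> n" using n2 amin_le1[of C e \<beta>] npos
    by (smt (verit, best) mult_left_le of_nat_0_le_iff of_nat_le_iff of_nat_mult)
  have inner: "n * amin C e \<beta> / 2 \<le> (\<Sum>p\<in>P. I p j)" if "j \<in> F" for j
  proof -
    have jn: "j < n" using that Fsub Cl_sub[OF gh(2)] by auto
    have "(\<Sum>p\<in>P. I p j) = card {p\<in>P. d p j \<le> t}" unfolding I_def using finP by (rule sum_indicator_card)
    moreover have "card (mball {..<n} d t j) \<le> card {p\<in>P. d p j \<le> t} + k"
    proof -
      have "mball {..<n} d t j \<subseteq> {p\<in>P. d p j \<le> t} \<union> set ms"
        unfolding mball_def P_def using d_sym jn by auto
      then have "card (mball {..<n} d t j) \<le> card ({p\<in>P. d p j \<le> t} \<union> set ms)"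
        by (intro card_mono) (auto simp: finP)
      also have "\<dots> \<le> card {p\<in>P. d p j \<le> t} + card (set ms)" by (rule card_Un_le)
      also have "card (set ms) = k" using dist len by (simp add: distinct_card)
      finally show ?thesis .
    qed
    ultimately show ?thesis using tball[OF jn] n2 by linarith
  qed
  have total: "card F * (n * amin C e \<beta> / 2) \<le> (\<Sum>p\<in>P. \<Sum>j\<in>F. I p j)"
  proof -
    have "card F * (n * amin C e \<beta> / 2) = (\<Sum>j\<in>F. n * amin C e \<beta> / 2)" by simp
    also have "\<dots> \<le> (\<Sum>j\<in>F. \<Sum>p\<in>P. I p j)" by (rule sum_mono) (rule inner)
    also have "\<dots> = (\<Sum>p\<in>P. \<Sum>j\<in>F. I p j)" by (rule sum.swap)
    finally show ?thesis .
  qed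
  have Pne: "P \<noteq> {}"
  proof
    assume "P = {}"
    then have "{..<n} \<subseteq> set ms" unfolding P_def by auto
    then have "card {..<n} \<le> card (set ms)" by (intro card_mono) auto
    also have "card (set ms) = k" using dist len by (simp add: distinct_card)
    finally show False using kn k2 by simp
  qed
  have "Max ((\<lambda>q. \<Sum>j\<in>F. I q j) ` P) \<in> (\<lambda>q. \<Sum>j\<in>F. I q j) ` P"
    using Pne finP by (intro Max_in) auto
  then obtain p where pP: "p \<in> P" and pmax: "(\<Sum>j\<in>F. I p j) = Max ((\<lambda>q. \<Sum>j\<in>F. I q j) ` P)" by auto
  have "(\<Sum>q\<in>P. \<Sum>j\<in>F. I q j) \<le> card P * (\<Sum>j\<in>F. I p j)"
  proof (rule sum_bounded_above)
    fix q assume "q \<in> P"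
    then show "(\<Sum>j\<in>F. I q j) \<le> (\<Sum>j\<in>F. I p j)" unfolding pmax using finP by (intro Max_ge) auto
  qed
  moreover have "card P \<le> n" unfolding P_def by (metis card_lessThan card_mono Diff_subset finite_lessThan)
  moreover have vnn: "0 \<le> (\<Sum>j\<in>F. I p j)" unfolding I_def by (intro sum_nonneg) auto
  ultimately have "card F * (n * amin C e \<beta> / 2) \<le> n * (\<Sum>j\<in>F. I p j)"
    using total by (smt (verit) mult_right_mono of_nat_le_iff)
  then have val: "card F * amin C e \<beta> / 2 \<le> (\<Sum>j\<in>F. I p j)" using npos by (simp add: field_simps)
  define G where "G = {j\<in>F. d p j \<le> t}"
  have cG: "(\<Sum>j\<in>F. I p j) = card G" unfolding I_def G_def using finF by (rule sum_indicator_card)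
  have Gcard: "\<beta> * n * amin C e \<beta> / 4 \<le> card G"
  proof -
    have "\<beta> * n / 2 * amin C e \<beta> \<le> card F * amin C e \<beta>"
      using F_card less_imp_le[OF amin_pos[OF \<beta> Cpos, of e]] by (intro mult_right_mono) auto
    then show ?thesis using val cG by simp
  qed
  have pn: "p < n" "p \<notin> set ms" using pP unfolding P_def by auto
  have GCl: "G \<subseteq> Cl h" unfolding G_def using Fsub by auto
  have finG: "finite G" using finF unfolding G_def by simp
  define ub where "ub j = (if j \<in> Cl g then (d (ms ! alt j) j)^2 else if j \<in> G then (d p j)^2 else mcost d ms j)" for j
  have ub: "mcost d (ms[g:=p]) j \<le> ub j" if jn: "j < n" for j
  proof -
    have nth: "ms[g:=p] ! q = (if q = g then p else ms ! q)" if "q < k" for q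
      using that len by (simp add: nth_list_update)
    have nn: "\<forall>q<length (ms[g:=p]). 0 \<le> d (ms[g:=p] ! q) j"
      using nth len pn(1) ms_lt d_nonneg jn by auto
    have lenu: "length (ms[g:=p]) = k" using len by simp
    show ?thesis
    proof (cases "j \<in> Cl g")
      case True
      then have "alt j < k" "alt j \<noteq> g" using alt by auto
      then show ?thesis using mcost_le[where g="alt j" and ms="ms[g:=p]" and d=d and j=j, OF _ nn] nth True lenu unfolding ub_def by simp
    next
      case notg: False
      show ?thesis
      proof (cases "j \<in> G")
        case True
        then show ?thesis using mcost_le[where g=g and ms="ms[g:=p]" and d=d and j=j, OF _ nn] nth notg lenu gh unfolding ub_def by simp
      next
        case False
        obtain gq where gq: "gq < k" "j \<in> Cl gq" using own[OF jn] by blast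
        then have "gq \<noteq> g" using notg by auto
        then show ?thesis using mcost_le[where g=gq and ms="ms[g:=p]" and d=d and j=j, OF _ nn] nth notg False lenu gq mcost_eq[OF gq]
          unfolding ub_def by simp
      qed
    qed
  qed
  have "(\<Sum>j<n. mcost d ms j) \<le> (\<Sum>j<n. mcost d (ms[g:=p]) j)" using opt[OF gh(1) pn] .
  also have "\<dots> \<le> (\<Sum>j<n. ub j)" by (rule sum_mono) (use ub in auto)
  finally have "0 \<le> (\<Sum>j<n. ub j - mcost d ms j)" by (simp add: sum_subtractf)
  also have "(\<Sum>j<n. ub j - mcost d ms j) = (\<Sum>j\<in>{..<n} - Cl g. ub j - mcost d ms j) + (\<Sum>j\<in>Cl g. ub j - mcost d ms j)"
    using Cl_sub[OF gh(1)] by (intro sum.subset_diff) auto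
  also have "(\<Sum>j\<in>Cl g. ub j - mcost d ms j) = (\<Sum>j\<in>Cl g. (d (ms ! alt j) j)^2 - (d (ms ! g) j)^2)"
    using mcost_eq[OF gh(1)] unfolding ub_def by (intro sum.cong) auto
  also have "(\<Sum>j\<in>{..<n} - Cl g. ub j - mcost d ms j) = (\<Sum>j\<in>{..<n} - Cl g. if j \<in> G then (d p j)^2 - (d (ms!h) j)^2 else 0)"
    using mcost_eq[OF gh(2)] GCl unfolding ub_def by (intro sum.cong) auto
  also have "\<dots> = (\<Sum>j\<in>({..<n} - Cl g) \<inter> G. (d p j)^2 - (d (ms!h) j)^2)"
    by (rule sum.inter_restrict[symmetric]) simp
  also have "({..<n} - Cl g) \<inter> G = G"
    using GCl Cl_sub[OF gh(2)] Cl_disj gh by blast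
  also have "(\<Sum>j\<in>G. (d p j)^2 - (d (ms!h) j)^2) \<le> (\<Sum>j\<in>G. t^2 - \<rho>^2)"
  proof (rule sum_mono)
    fix j assume jG: "j \<in> G"
    then have jn: "j < n" using GCl Cl_sub[OF gh(2)] by auto
    have "d p j \<le> t" "\<rho> < d (ms!h) j" using jG unfolding G_def F_def by auto
    moreover have "0 \<le> d p j" using d_nonneg pn(1) jn by simp
    ultimately have "(d p j)^2 \<le> t^2" "\<rho>^2 \<le> (d (ms!h) j)^2"
      using \<rho>pos by (auto intro!: power_mono)
    then show "(d p j)^2 - (d (ms!h) j)^2 \<le> t^2 - \<rho>^2" by simp
  qed
  also have "(\<Sum>j\<in>G. t^2 - \<rho>^2) = - (card G * (3/4 * \<rho>^2))" unfolding t_def by (simp add: power_divide)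
  finally have A: "card G * (3/4 * \<rho>^2) \<le> (\<Sum>j\<in>Cl g. (d (ms ! alt j) j)^2 - (d (ms ! g) j)^2)" by simp
  have "\<beta> * n * amin C e \<beta> / 4 * (3/4 * \<rho>^2) \<le> card G * (3/4 * \<rho>^2)"
    using Gcard by (intro mult_right_mono) auto
  then show ?thesis using A \<rho>sq by (simp add: algebra_simps)
qed

lemma gain2:
  fixes \<beta> :: real and alt :: "nat \<Rightarrow> nat"
  assumes gh: "g < k" "h < k" "g \<noteq> h" and \<beta>: "\<beta> > 0" and big: "\<beta> * n \<le> card (Cl h)"
    and alt: "\<And>j. j \<in> Cl g \<Longrightarrow> alt j < k \<and> alt j \<noteq> g"
    and n1: "1 \<le> \<beta> * n / 2" and n2: "2 * k \<le> n * amin C e \<beta>"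
  shows "cgain C e \<beta> * n * (n powr (1/e))^2
          \<le> (\<Sum>j\<in>Cl g. (d (ms ! alt j) j)^2 - (d (ms ! g) j)^2)"
proof -
  have npos: "n > 0" using n1 \<beta> by (cases n) auto
  have "(\<beta> * n / (2*C)) powr (2/e) = (\<beta>/(2*C)) powr (2/e) * n powr (2/e)"
    using \<beta> Cpos by (subst powr_mult[symmetric]) auto
  moreover have "n powr (2/e) = (n powr (1/e))^2" using npos by (simp add: powr_inv_sq)
  ultimately have eq: "3/16 * \<beta> * amin C e \<beta> * n * (\<beta> * n / (2*C)) powr (2/e) = cgain C e \<beta> * n * (n powr (1/e))^2"
    unfolding cgain_def by simp
  show ?thesis using gain[where alt=alt, OF gh \<beta> big alt n1 n2] eq by linarith
qed

lemma Dm_eq: "Dm = C powr (1/e) * n powr (1/e)"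
  unfolding Dm_def using Cpos by (simp add: powr_mult)

end

definition c1 :: "real \<Rightarrow> real \<Rightarrow> nat \<Rightarrow> real" where
  "c1 C e k = min (1/k) (cgain C e (1/k) / C powr (2/e))"

definition c3 :: "real \<Rightarrow> real \<Rightarrow> nat \<Rightarrow> real" where
  "c3 C e k = cgain C e (c1 C e k) / (3 * C powr (1/e))"

lemma c1_pos: "C > 0 \<Longrightarrow> k > 0 \<Longrightarrow> c1 C e k > 0"
  unfolding c1_def using cgain_pos[of "1/k" C e] by simp

lemma c3_pos: "C > 0 \<Longrightarrow> k > 0 \<Longrightarrow> c3 C e k > 0"
  unfolding c3_def using cgain_pos[of "c1 C e k" C e] c1_pos by simp

context km begin

lemma cluster_lb:
  assumes n1: "2*k \<le> n" and n2: "2*k \<le> n * amin C e (1/k)" and g: "g < k"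
  shows "c1 C e k * n \<le> card (Cl g)"
proof -
  have npos: "n > 0" using n1 k2 by simp
  obtain h where h: "h < k" "real n \<le> k * card (Cl h)" using big_cluster by blast
  show ?thesis
  proof (cases "h = g")
    case True
    have "c1 C e k * n \<le> 1/k * n" unfolding c1_def by (intro mult_right_mono) auto
    also have "\<dots> \<le> card (Cl g)" using h True k2 by (simp add: field_simps)
    finally show ?thesis .
  next
    case False
    have kk: "(1/k) * n \<le> card (Cl h)" using h k2 by (simp add: field_simps)
    have "cgain C e (1/k) * n * (n powr (1/e))^2 \<le> (\<Sum>j\<in>Cl g. (d (ms ! h) j)^2 - (d (ms ! g) j)^2)"
      using gain2[of g h "1/k" "\<lambda>_. h", OF g h(1) _ _ kk] False h n1 n2 k2
      by (simp add: field_simps)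
    also have "\<dots> \<le> (\<Sum>j\<in>Cl g. Dm^2)"
    proof (rule sum_mono)
      fix j assume j: "j \<in> Cl g"
      then have jn: "j < n" using Cl_sub[OF g] by auto
      have "0 \<le> d (ms ! h) j" "d (ms ! h) j \<le> Dm" using d_nonneg diam ms_lt h(1) jn by auto
      then have "(d (ms ! h) j)^2 \<le> Dm^2" by (intro power_mono) auto
      then show "(d (ms ! h) j)^2 - (d (ms ! g) j)^2 \<le> Dm^2" using zero_le_power2[of "d (ms ! g) j"] by linarith
    qed
    also have "\<dots> = card (Cl g) * (C powr (1/e))^2 * (n powr (1/e))^2" by (simp add: Dm_eq power_mult_distrib)
    finally have A: "cgain C e (1/k) * n * (n powr (1/e))^2 \<le> card (Cl g) * (C powr (1/e))^2 * (n powr (1/e))^2" .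
    have np: "(n powr (1/e))^2 > 0" using npos by simp
    have "cgain C e (1/k) * n \<le> card (Cl g) * (C powr (1/e))^2"
      using A np by (simp add: mult.assoc mult_le_cancel_right)
    moreover have "(C powr (1/e))^2 = C powr (2/e)" using Cpos by (simp add: powr_inv_sq)
    ultimately have "cgain C e (1/k) / C powr (2/e) * n \<le> card (Cl g)"
      using Cpos by (simp add: field_simps)
    moreover have "c1 C e k * n \<le> cgain C e (1/k) / C powr (2/e) * n"
      unfolding c1_def by (intro mult_right_mono) auto
    ultimately show ?thesis by linarith
  qed
qed

lemma separation:
  assumes n1: "2*k \<le> n" and n2: "2*k \<le> n * amin C e (1/k)"
    and n3: "1 \<le> c1 C e k * n / 2" and n4: "2 * k \<le> n * amin C e (c1 C e k)"
    and gh: "g < k" "h < k" "g \<noteq> h"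
  shows "c3 C e k * n powr (1/e) \<le> d (ms ! g) (ms ! h)"
proof -
  have npos: "n > 0" using n1 k2 by simp
  define D where "D = d (ms ! g) (ms ! h)"
  have Dnn: "0 \<le> D" "D \<le> Dm" unfolding D_def using d_nonneg diam ms_lt gh by auto
  have "cgain C e (c1 C e k) * n * (n powr (1/e))^2 \<le> (\<Sum>j\<in>Cl g. (d (ms ! h) j)^2 - (d (ms ! g) j)^2)"
    using gain2[of g h "c1 C e k" "\<lambda>_. h", OF gh _ cluster_lb[OF n1 n2 gh(2)]] gh n3 n4 c1_pos[OF Cpos] k2
    by simp
  also have "\<dots> \<le> (\<Sum>j\<in>Cl g. 3 * D * Dm)"
  proof (rule sum_mono)
    fix j assume j: "j \<in> Cl g"
    then have jn: "j < n" using Cl_sub[OF gh(1)] by auto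
    have x: "0 \<le> d (ms ! g) j" "d (ms ! g) j \<le> Dm" using d_nonneg diam ms_lt gh jn by auto
    have "d (ms ! h) j \<le> d (ms ! h) (ms ! g) + d (ms ! g) j" using d_tri ms_lt gh jn by blast
    also have "d (ms ! h) (ms ! g) = D" unfolding D_def using d_sym ms_lt gh by auto
    finally have y: "d (ms ! h) j \<le> D + d (ms ! g) j" .
    have "0 \<le> d (ms ! h) j" using d_nonneg ms_lt gh jn by auto
    then have "(d (ms ! h) j)^2 \<le> (D + d (ms ! g) j)^2" using y by (intro power_mono) auto
    also have "\<dots> = (d (ms ! g) j)^2 + 2 * D * d (ms ! g) j + D * D" by (simp add: power2_eq_square algebra_simps)
    also have "2 * D * d (ms ! g) j \<le> 2 * D * Dm" using x Dnn by (intro mult_left_mono) auto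
    also have "D * D \<le> D * Dm" using Dnn by (intro mult_left_mono) auto
    finally show "(d (ms ! h) j)^2 - (d (ms ! g) j)^2 \<le> 3 * D * Dm" by simp
  qed
  also have "\<dots> = card (Cl g) * (3 * D * Dm)" by simp
  also have "\<dots> \<le> n * (3 * D * Dm)"
  proof -
    have "card (Cl g) \<le> card {..<n}" using Cl_sub[OF gh(1)] by (intro card_mono) auto
    then show ?thesis using Dnn by (intro mult_right_mono) auto
  qed
  finally have A: "cgain C e (c1 C e k) * n * (n powr (1/e))^2 \<le> n * (3 * D * (C powr (1/e) * n powr (1/e)))"
    unfolding Dm_eq .
  have np: "n powr (1/e) > 0" using npos by simp
  have "cgain C e (c1 C e k) * (n powr (1/e)) \<le> 3 * D * C powr (1/e)"
    using A np npos by (simp add: power2_eq_square algebra_simps mult_le_cancel_left_pos)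
  then show ?thesis unfolding c3_def D_def[symmetric] using Cpos by (simp add: field_simps)
qed

end

lemma eucl_move:
  fixes x a b y :: "'a::real_inner"
  assumes L: "norm (a - x) = L" "L > 0" and P: "norm (b - x) = P" "P > 0"
  and s: "0 \<le> s" "s \<le> L" and epn: "0 \<le> ep"
  and y1: "norm (y - x) \<le> s + ep" and y2: "norm (y - a) \<le> L - s + ep"
  shows "P - L + s * ((norm (a - b))^2 - (L - P)^2) / (2 * L * P) - sqrt (4 * s * ep + ep^2) - ep
          \<le> norm (y - b) - norm (y - a)"
proof -
  define v where "v = y - x"
  define A where "A = a - x"
  define B where "B = b - x"
  define z where "z = x + (s/L) *\<^sub>R A"
  define q where "q = inner A B"
  have nv: "(norm v)^2 = inner v v" by (simp add: power2_norm_eq_inner)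
  have LL: "inner A A = L^2" using L unfolding A_def by (simp add: power2_norm_eq_inner[symmetric])
  have PP: "inner B B = P^2" using P unfolding B_def by (simp add: power2_norm_eq_inner[symmetric])
  have "(norm (y - a))^2 \<le> (L - s + ep)^2" using y2 by (intro power_mono) auto
  moreover have "(norm (y - a))^2 = inner v v - 2 * inner v A + L^2"
  proof -
    have e: "y - a = v - A" unfolding v_def A_def by simp
    have "(norm (y - a))^2 = inner (v - A) (v - A)" unfolding e by (simp only: power2_norm_eq_inner)
    also have "\<dots> = inner v v - 2 * inner v A + inner A A"
      by (simp add: inner_diff_left inner_diff_right inner_commute)
    finally show ?thesis using LL by simp
  qed
  ultimately have Z: "inner v v + L^2 - (L - s + ep)^2 \<le> 2 * inner v A" by simp
  have vv: "inner v v \<le> (s + ep)^2"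
    using y1 unfolding v_def[symmetric] nv[symmetric] using s epn by (intro power_mono) auto
  define w where "w = L *\<^sub>R v - s *\<^sub>R A"
  have "inner w w = L^2 * inner v v - 2 * L * s * inner v A + s^2 * inner A A"
    unfolding w_def by (simp add: inner_diff_left inner_diff_right inner_commute power2_eq_square algebra_simps)
  then have ww: "inner w w = L^2 * inner v v - 2 * L * s * inner v A + s^2 * L^2" using LL by simp
  have "L * s * (inner v v + L^2 - (L - s + ep)^2) \<le> L * s * (2 * inner v A)"
    using Z L s by (intro mult_left_mono) auto
  then have "inner w w \<le> L^2 * inner v v - L * s * (inner v v + L^2 - (L - s + ep)^2) + s^2 * L^2"
    unfolding ww by simp
  also have "\<dots> = L * (inner v v * (L - s)) + L * (s * (L - s + ep)^2 - L^2 * s + s^2 * L)"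
    by (simp add: algebra_simps power2_eq_square)
  also have "\<dots> \<le> L * ((s + ep)^2 * (L - s)) + L * (s * (L - s + ep)^2 - L^2 * s + s^2 * L)"
    using vv L s by (intro add_right_mono mult_left_mono mult_right_mono) auto
  also have "\<dots> = L * (L * (4 * s * ep + ep^2) - 4 * s^2 * ep)"
    by (simp add: algebra_simps power2_eq_square)
  also have "\<dots> \<le> L * (L * (4 * s * ep + ep^2))"
    using L s epn by (intro mult_left_mono) auto
  finally have w2: "inner w w \<le> L^2 * (4 * s * ep + ep^2)" by (simp add: power2_eq_square)
  have yz: "y - z = (1/L) *\<^sub>R w" unfolding w_def z_def v_def using L by (simp add: algebra_simps)
  have "(norm (y - z))^2 = inner w w / L^2" unfolding yz power2_norm_eq_inner
    by (simp add: power2_eq_square)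
  also have "\<dots> \<le> 4 * s * ep + ep^2" using w2 L by (simp add: field_simps)
  finally have E: "norm (y - z) \<le> sqrt (4 * s * ep + ep^2)" by (rule real_le_rsqrt)
  have zb2: "(norm (z - b))^2 = P^2 - 2 * (s/L) * q + s^2"
  proof -
    have e: "z - b = (s/L) *\<^sub>R A - B" unfolding z_def B_def by simp
    have "(norm (z - b))^2 = inner ((s/L) *\<^sub>R A - B) ((s/L) *\<^sub>R A - B)"
      unfolding e by (simp only: power2_norm_eq_inner)
    also have "\<dots> = inner B B - 2 * (s/L) * q + (s/L)^2 * inner A A"
      unfolding q_def by (simp add: inner_diff_left inner_diff_right inner_commute power2_eq_square algebra_simps)
    finally show ?thesis using LL PP L by (simp add: power2_eq_square field_simps)
  qed
  have CS: "\<bar>q\<bar> \<le> L * P" unfolding q_def using Cauchy_Schwarz_ineq2[of A B] L P unfolding A_def B_def by simp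
  have "(P - s * q / (L * P))^2 \<le> (norm (z - b))^2"
  proof -
    have "q^2 \<le> (L*P)^2" using CS by (metis abs_le_square_iff abs_mult abs_of_pos L(2) P(2) mult_pos_pos)
    then have "s^2 * q^2 / (L*P)^2 \<le> s^2" using L P
      by (simp add: divide_le_eq mult_left_mono)
    moreover have "(P - s * q / (L * P))^2 = P^2 - 2 * (s/L) * q + s^2 * q^2 / (L*P)^2"
      using L P by (simp add: power2_eq_square field_simps)
    ultimately show ?thesis unfolding zb2 by simp
  qed
  then have zb: "P - s * q / (L * P) \<le> norm (z - b)"
    by (metis abs_le_square_iff abs_ge_self abs_norm_cancel order_trans)
  have qab: "q = (L^2 + P^2 - (norm (a - b))^2) / 2"
  proof -
    have e: "a - b = A - B" unfolding A_def B_def by simp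
    have "(norm (a - b))^2 = inner (A - B) (A - B)" unfolding e by (simp only: power2_norm_eq_inner)
    also have "\<dots> = L^2 - 2 * q + P^2" unfolding q_def using LL PP
      by (simp add: inner_diff_left inner_diff_right inner_commute)
    finally show ?thesis by simp
  qed
  have "norm (z - b) \<le> norm (y - b) + norm (y - z)"
    by (metis norm_diff_triangle_le norm_minus_commute order_refl add.commute)
  then have "P - s * q / (L * P) - sqrt (4 * s * ep + ep^2) \<le> norm (y - b)" using zb E by linarith
  moreover have "P - s * q / (L * P) = P - L + s * ((norm (a - b))^2 - (L - P)^2) / (2 * L * P) + (L - s)"
    unfolding qab using L P by (simp add: field_simps power2_eq_square)
  ultimately show ?thesis using y2 by linarith
qed

locale kme = km d n C e k ms Cl for d n C e k ms Cl +
  fixes emb :: "nat \<Rightarrow> 'a::real_inner" and K :: real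
  assumes ciso: "coarse_isometry {..<n} d dist K emb"
  and interp: "\<And>i j a. i < n \<Longrightarrow> j < n \<Longrightarrow> 0 \<le> a \<Longrightarrow> a \<le> 1 \<Longrightarrow>
        \<exists>g\<in>{..<n}. \<bar>d i g - a * d i j\<bar> \<le> K \<and> \<bar>d g j - (1 - a) * d i j\<bar> \<le> K"
begin

lemma emb_le: "i < n \<Longrightarrow> j < n \<Longrightarrow> norm (emb i - emb j) \<le> d i j + K"
  using ciso unfolding coarse_isometry_def dist_norm by force
lemma emb_ge: "i < n \<Longrightarrow> j < n \<Longrightarrow> d i j \<le> norm (emb i - emb j) + K"
  using ciso unfolding coarse_isometry_def dist_norm by force
lemma K_nonneg: "n > 0 \<Longrightarrow> 0 \<le> K"
  using emb_ge[of 0 0] d_refl[of 0] by simp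

definition phi where "phi g h j = d (ms!h) j - d (ms!g) j"
definition Bd where "Bd g h t = {j\<in>{..<n}. \<bar>phi g h j\<bar> \<le> t}"

lemma Bd_mono: "t \<le> t' \<Longrightarrow> Bd g h t \<subseteq> Bd g h t'"
  unfolding Bd_def by auto
lemma Bd_sub: "Bd g h t \<subseteq> {..<n}" unfolding Bd_def by auto
lemma Bd_fin: "finite (Bd g h t)" using Bd_sub by (rule finite_subset) simp

lemma band_step:
  assumes gh: "g<k" "h<k" "g\<noteq>h"
  and ga: "0 < \<gamma>" "\<gamma> \<le> 5 * (d (ms!g) (ms!h))^2 / (128 * Dm^2)"
  and t1: "1 \<le> t" and t2: "t + 2*K \<le> d (ms!g) (ms!h) / 2"
  and K1: "K \<le> d (ms!g) (ms!h)/4" "K \<le> Dm"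
  and s1: "8*(2*t+1)/\<gamma> \<le> d (ms!g) (ms!h)/4 - K"
  and s2: "1 \<le> 8*(2*t+1)/\<gamma>" "12*K + 9*K^2 \<le> \<gamma>^2 * (8*(2*t+1)/\<gamma>)/16" "28*K \<le> \<gamma> * (8*(2*t+1)/\<gamma>)"
  shows "card (Bd g h t) * (1 + ((2*t+1) powr e / C) / max (C * (8*(2*t+1)/\<gamma> + K + (2*t+1)) powr e) 1)
         \<le> card (Bd g h (t + 2*(8*(2*t+1)/\<gamma> + K + (2*t+1))))"
proof -
  define a where "a = ms!g"
  define b where "b = ms!h"
  define D where "D = d a b"
  define s where "s = 8*(2*t+1)/\<gamma>"
  define hh where "hh = 2*t+1"
  define Q where "Q = s + K + hh"
  define tb where "tb = t + 2*Q"
  have an: "a < n" and bn: "b < n" unfolding a_def b_def using ms_lt gh by auto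
  have npos: "n > 0" using an by simp
  have K0: "0 \<le> K" using K_nonneg[OF npos] .
  have sga: "s * \<gamma> = 8*(2*t+1)" unfolding s_def using ga by simp
  have s1': "s \<le> D/4 - K" using s1 unfolding s_def D_def a_def b_def .
  have t2': "t + 2*K \<le> D/2" using t2 unfolding D_def a_def b_def .
  have K1': "K \<le> D/4" using K1 unfolding D_def a_def b_def by simp
  have ga': "\<gamma> \<le> 5 * D^2 / (128 * Dm^2)" using ga unfolding D_def a_def b_def by simp
  have sge1: "1 \<le> s" using s2 unfolding s_def by simp
  have phi_eq: "phi g h j = d b j - d a j" for j unfolding phi_def a_def b_def by simp
  have key: "\<exists>y<n. \<forall>z\<in>mball {..<n} d hh y. z \<in> Bd g h tb \<and> z \<notin> Bd g h t \<and> d x z \<le> Q"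
    if xS: "x \<in> Bd g h t" for x
  proof -
    have xn: "x < n" and px: "\<bar>d b x - d a x\<bar> \<le> t" using xS unfolding Bd_def phi_eq by auto
    have tri: "D \<le> d a x + d b x" unfolding D_def using d_tri[OF an xn bn] d_sym[OF xn bn] by simp
    have Lx: "D/4 \<le> d a x" using tri px t2' K0 by linarith
    have Px: "D/4 \<le> d b x" using tri px t2' K0 by linarith
    define L where "L = d x a"
    have Ldef: "L = d a x" unfolding L_def using d_sym[OF xn an] .
    have sL: "s \<le> L" using s1' Lx K0 Ldef by linarith
    have Lpos: "0 < L" using sL sge1 by linarith
    define lam where "lam = s / L"
    have lam: "0 \<le> lam" "lam \<le> 1" unfolding lam_def using sL Lpos sge1 by auto
    obtain y where yn: "y < n" and y1: "\<bar>d x y - lam * d x a\<bar> \<le> K" and y2: "\<bar>d y a - (1 - lam) * d x a\<bar> \<le> K"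
      using interp[OF xn an lam] by auto
    have lamL: "lam * d x a = s" unfolding lam_def L_def[symmetric] using Lpos by simp
    have dxy: "d x y \<le> s + K" using y1 lamL by linarith
    have dya: "d y a \<le> L - s + K" using y2 lamL unfolding L_def[symmetric] by (simp add: algebra_simps)
    define LE where "LE = norm (emb a - emb x)"
    define PE where "PE = norm (emb b - emb x)"
    have LE1: "d a x - K \<le> LE" "LE \<le> d a x + K" unfolding LE_def using emb_le[OF an xn] emb_ge[OF an xn] by linarith+
    have PE1: "d b x - K \<le> PE" "PE \<le> d b x + K" unfolding PE_def using emb_le[OF bn xn] emb_ge[OF bn xn] by linarith+
    have LEpos: "LE > 0" and sLE: "s \<le> LE" using LE1 Lx s1' sge1 by linarith+
    have PEpos: "PE > 0" using PE1 Px s1' sge1 by linarith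
    have Y1: "norm (emb y - emb x) \<le> s + 3*K" using emb_le[OF yn xn] dxy d_sym[OF xn yn] K0 by linarith
    have Y2: "norm (emb y - emb a) \<le> LE - s + 3*K" using emb_le[OF yn an] dya LE1 Ldef by linarith
    have EM: "PE - LE + s * ((norm (emb a - emb b))^2 - (LE - PE)^2) / (2 * LE * PE) - sqrt (4 * s * (3*K) + (3*K)^2) - 3*K
          \<le> norm (emb y - emb b) - norm (emb y - emb a)"
      by (rule eucl_move[OF LE_def[symmetric] LEpos PE_def[symmetric] PEpos _ sLE _ Y1 Y2]) (use sge1 K0 in auto)
    have AB: "3*D/4 \<le> norm (emb a - emb b)" using emb_ge[OF an bn] K1' unfolding D_def by linarith
    have D0: "0 \<le> D" unfolding D_def using d_nonneg an bn by simp
    have LP: "\<bar>LE - PE\<bar> \<le> D/2" using LE1 PE1 px t2' by linarith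
    have num: "5 * D^2 / 16 \<le> (norm (emb a - emb b))^2 - (LE - PE)^2"
    proof -
      have "(3*D/4)^2 \<le> (norm (emb a - emb b))^2" using AB D0 by (intro power_mono) auto
      moreover have "(\<bar>LE - PE\<bar>)^2 \<le> (D/2)^2" using LP by (intro power_mono) auto
      then have "(LE - PE)^2 \<le> (D/2)^2" by simp
      ultimately show ?thesis by (simp add: power2_eq_square)
    qed
    have Dmx: "d a x \<le> Dm" "d b x \<le> Dm" using diam an bn xn by auto
    have den: "2 * LE * PE \<le> 8 * Dm^2"
    proof -
      have "LE \<le> 2 * Dm" "PE \<le> 2 * Dm" using LE1 PE1 Dmx K1 by linarith+
      then have "LE * PE \<le> (2*Dm) * (2*Dm)" using LEpos PEpos by (intro mult_mono) auto
      then show ?thesis by (simp add: power2_eq_square)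
    qed
    have Dmpos: "Dm > 0" using Dm_pos npos by simp
    have Gam: "\<gamma> \<le> ((norm (emb a - emb b))^2 - (LE - PE)^2) / (2 * LE * PE)"
    proof -
      have "\<gamma> \<le> (5 * D^2 / 16) / (8 * Dm^2)" using ga' by (simp add: field_simps)
      also have "\<dots> \<le> ((norm (emb a - emb b))^2 - (LE - PE)^2) / (8 * Dm^2)"
        using num Dmpos by (intro divide_right_mono) auto
      also have "\<dots> \<le> ((norm (emb a - emb b))^2 - (LE - PE)^2) / (2 * LE * PE)"
      proof (rule divide_left_mono)
        show "0 \<le> (norm (emb a - emb b))^2 - (LE - PE)^2" using num D0
          using zero_le_power2[of D] by linarith
        show "2 * LE * PE \<le> 8 * Dm^2" by (rule den)
        show "0 < 8 * Dm^2 * (2 * LE * PE)" using LEpos PEpos Dmpos by simp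
      qed
      finally show ?thesis .
    qed
    have sG: "s * \<gamma> \<le> s * ((norm (emb a - emb b))^2 - (LE - PE)^2) / (2 * LE * PE)"
      using Gam sge1 by (metis mult_left_mono times_divide_eq_right order_trans zero_le_one)
    have sq: "sqrt (4 * s * (3*K) + (3*K)^2) \<le> \<gamma> * s / 4"
    proof (rule real_le_lsqrt)
      show "0 \<le> \<gamma> * s / 4" using ga sge1 by simp
      have "9*K^2 \<le> 9*K^2 * s" using sge1 K0 mult_left_mono[of 1 s "9*K^2"] by simp
      then have "4 * s * (3*K) + (3*K)^2 \<le> (12*K + 9*K^2) * s"
        by (simp add: algebra_simps power2_eq_square)
      also have "\<dots> \<le> (\<gamma>^2 * s / 16) * s" using s2(2) sge1 unfolding s_def[symmetric] by (intro mult_right_mono) auto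
      also have "\<dots> = (\<gamma> * s / 4)^2" by (simp add: power2_eq_square)
      finally show "4 * s * (3*K) + (3*K)^2 \<le> (\<gamma> * s / 4)^2" .
    qed
    have K7: "7 * K \<le> \<gamma> * s / 4" using s2(3) unfolding s_def[symmetric] by simp
    have phiy: "7*t + 4 \<le> d b y - d a y"
    proof -
      have "norm (emb y - emb b) - K \<le> d b y" using emb_le[OF yn bn] d_sym[OF yn bn] by simp
      moreover have "d a y \<le> norm (emb y - emb a) + K" using emb_ge[OF an yn] norm_minus_commute[of "emb a" "emb y"] by simp
      moreover have "d b x - d a x \<le> PE - LE + 2*K" using LE1 PE1 by linarith
      ultimately have "d b y - d a y \<ge> (d b x - d a x) + s * \<gamma> - \<gamma> * s / 4 - 7*K"
        using EM sG sq by linarith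
      then show ?thesis using K7 sga px by (simp add: algebra_simps)
    qed
    have "\<forall>z\<in>mball {..<n} d hh y. z \<in> Bd g h tb \<and> z \<notin> Bd g h t \<and> d x z \<le> Q"
    proof
      fix z assume "z \<in> mball {..<n} d hh y"
      then have zn: "z < n" and yz: "d y z \<le> hh" unfolding mball_def by auto
      have "d b y \<le> d b z + d z y" by (rule d_tri[OF bn zn yn])
      moreover have "d a z \<le> d a y + d y z" by (rule d_tri[OF an yn zn])
      moreover have "d z y = d y z" using d_sym zn yn by simp
      ultimately have lo1: "3*t + 2 \<le> d b z - d a z" using phiy yz unfolding hh_def by linarith
      have xz: "d x z \<le> Q" using d_tri[OF xn yn zn] dxy yz unfolding Q_def by linarith
      have "d b z \<le> d b x + d x z" by (rule d_tri[OF bn xn zn])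
      moreover have "d a x \<le> d a z + d z x" by (rule d_tri[OF an zn xn])
      moreover have "d z x = d x z" using d_sym zn xn by simp
      ultimately have up1: "d b z - d a z \<le> tb" using px xz unfolding tb_def by linarith
      have "z \<in> Bd g h tb" unfolding Bd_def phi_eq using zn lo1 up1 t1 by auto
      moreover have "z \<notin> Bd g h t" unfolding Bd_def phi_eq using lo1 t1 by auto
      ultimately show "z \<in> Bd g h tb \<and> z \<notin> Bd g h t \<and> d x z \<le> Q" using xz by simp
    qed
    then show ?thesis using yn by blast
  qed
  then obtain Y where Y: "\<And>x. x \<in> Bd g h t \<Longrightarrow> Y x < n \<and> (\<forall>z\<in>mball {..<n} d hh (Y x). z \<in> Bd g h tb \<and> z \<notin> Bd g h t \<and> d x z \<le> Q)"
    by metis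
  define S where "S = Bd g h t"
  define H where "H x = mball {..<n} d hh (Y x)" for x
  define U where "U = (\<Union>x\<in>S. H x)"
  have Hsub: "H x \<subseteq> {..<n}" for x unfolding H_def mball_def by auto
  have finH: "finite (H x)" for x using Hsub finite_subset by blast
  have finS: "finite S" unfolding S_def by (rule Bd_fin)
  have finU: "finite U" unfolding U_def using finS finH by blast
  have Utb: "U \<subseteq> Bd g h tb" and US: "U \<inter> S = {}" unfolding U_def H_def S_def using Y by blast+
  have Stb: "S \<subseteq> Bd g h tb" unfolding S_def tb_def Q_def hh_def
    using sge1 K0 t1 by (intro Bd_mono) auto
  have Qpos: "Q > 0" unfolding Q_def hh_def using sge1 K0 t1 by simp
  have hhpos: "hh > 0" unfolding hh_def using t1 by simp
  define Mx where "Mx = max (C * Q powr e) 1"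
  have Mx1: "Mx \<ge> 1" unfolding Mx_def by simp
  show ?thesis
  proof (cases "S = {}")
    case True
    then show ?thesis unfolding S_def by simp
  next
    case False
    have Hlow: "hh powr e / C \<le> card (H x)" if "x \<in> S" for x
    proof -
      have "min (real n) (hh powr e / C) \<le> card (H x)" unfolding H_def using lo[OF _ hhpos] Y that unfolding S_def by blast
      moreover have "card (H x) < n"
      proof -
        obtain x0 where "x0 \<in> S" using False by blast
        have "H x \<subseteq> {..<n} - S" using Hsub Y that US unfolding U_def S_def H_def by blast
        moreover have "card ({..<n} - S) < n"
        proof -
          have "card ({..<n} - S) = n - card S" using Bd_sub finS unfolding S_def by (simp add: card_Diff_subset)
          moreover have "card S > 0" using False finS by (simp add: card_gt_0_iff)
          moreover have "card S \<le> n" using Bd_sub unfolding S_def by (metis card_lessThan card_mono finite_lessThan)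
          ultimately show ?thesis using npos by linarith
        qed
        ultimately show ?thesis using card_mono[of "{..<n} - S" "H x"] by fastforce
      qed
      ultimately show ?thesis by linarith
    qed
    have cnt: "(\<Sum>x\<in>S. real (card (H x))) \<le> card U * Mx"
    proof -
      have "(\<Sum>x\<in>S. real (card (H x))) = (\<Sum>x\<in>S. \<Sum>z\<in>U. if z \<in> H x then 1 else 0)"
      proof (rule sum.cong)
        fix x assume "x \<in> S"
        then have "H x \<subseteq> U" unfolding U_def by blast
        then have "{z\<in>U. z \<in> H x} = H x" by blast
        then show "real (card (H x)) = (\<Sum>z\<in>U. if z \<in> H x then 1 else 0)"
          using sum_indicator_card[OF finU, of "\<lambda>z. z \<in> H x"] by simp
      qed simp
      also have "\<dots> = (\<Sum>z\<in>U. \<Sum>x\<in>S. if z \<in> H x then 1 else 0)" by (rule sum.swap)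
      also have "\<dots> \<le> (\<Sum>z\<in>U. Mx)"
      proof (rule sum_mono)
        fix z assume zU: "z \<in> U"
        then have zn: "z < n" using Utb Bd_sub by blast
        have "(\<Sum>x\<in>S. if z \<in> H x then 1 else 0) = real (card {x\<in>S. z \<in> H x})"
          by (rule sum_indicator_card[OF finS])
        also have "card {x\<in>S. z \<in> H x} \<le> card (mball {..<n} d Q z)"
        proof (rule card_mono)
          show "finite (mball {..<n} d Q z)" unfolding mball_def by simp
          show "{x\<in>S. z \<in> H x} \<subseteq> mball {..<n} d Q z"
          proof
            fix x assume "x \<in> {x\<in>S. z \<in> H x}"
            then have xS: "x \<in> S" and "z \<in> H x" by auto
            then have "d x z \<le> Q" using Y unfolding S_def H_def by blast
            moreover have "x < n" using xS Bd_sub unfolding S_def by blast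
            ultimately show "x \<in> mball {..<n} d Q z" unfolding mball_def using d_sym zn by auto
          qed
        qed
        then have "real (card {x\<in>S. z \<in> H x}) \<le> card (mball {..<n} d Q z)" by simp
        also have "\<dots> \<le> Mx" unfolding Mx_def by (rule hi[OF zn Qpos])
        finally show "(\<Sum>x\<in>S. if z \<in> H x then 1 else 0) \<le> Mx" .
      qed
      also have "\<dots> = card U * Mx" by simp
      finally show ?thesis .
    qed
    have "card S * (hh powr e / C) \<le> (\<Sum>x\<in>S. real (card (H x)))"
      using Hlow by (intro sum_bounded_below) auto
    then have "card S * (hh powr e / C) \<le> card U * Mx" using cnt by linarith
    moreover define Xv where "Xv = card S * (hh powr e / C)"
    ultimately have "Xv \<le> card U * Mx" by simp
    then have "Xv / Mx \<le> card U" using Mx1 by (subst pos_divide_le_eq) auto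
    then have A: "card S * ((hh powr e / C) / Mx) \<le> card U" unfolding Xv_def by simp
    have "card S + card U = card (S \<union> U)" using US finS finU by (simp add: card_Un_disjoint inf_commute)
    also have "\<dots> \<le> card (Bd g h tb)" using Stb Utb Bd_fin by (intro card_mono) auto
    finally have "real (card S) + card U \<le> card (Bd g h tb)" by linarith
    then show ?thesis using A unfolding S_def Mx_def tb_def Q_def hh_def s_def by (simp add: algebra_simps)
  qed
qed

end

lemma iterate_bound:
  fixes f :: "real \<Rightarrow> real"
  assumes bound: "\<And>t. f t \<le> N" and Lam: "1 \<le> \<Lambda>" and eta: "0 \<le> \<eta>"
    and step: "\<And>t. Tlo \<le> t \<Longrightarrow> t \<le> Tm \<Longrightarrow> f t * (1 + \<eta>) \<le> f (\<Lambda> * t)"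
    and fnn: "\<And>t. 0 \<le> f t" and Tlo: "0 \<le> Tlo"
  shows "Tlo \<le> t \<Longrightarrow> \<Lambda>^m * t \<le> Tm \<Longrightarrow> f t * (1 + \<eta>)^m \<le> N"
proof (induction m arbitrary: t)
  case 0
  then show ?case using bound by simp
next
  case (Suc m)
  have t0: "0 \<le> t" using Suc.prems Tlo by linarith
  have "t \<le> \<Lambda> * t" using Lam t0 by (metis mult_le_cancel_right1 mult.commute less_le_not_le)
  have "1 * t \<le> \<Lambda>^(Suc m) * t" using Lam t0 by (intro mult_right_mono one_le_power) auto
  then have "t \<le> \<Lambda>^(Suc m) * t" by simp
  then have tTm: "t \<le> Tm" using Suc.prems by linarith
  have "Tlo \<le> \<Lambda> * t" using \<open>t \<le> \<Lambda> * t\<close> Suc.prems by linarith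
  moreover have "\<Lambda>^m * (\<Lambda> * t) \<le> Tm" using Suc.prems by (simp add: mult.assoc mult.left_commute)
  ultimately have IH: "f (\<Lambda> * t) * (1 + \<eta>)^m \<le> N" by (rule Suc.IH)
  have "f t * (1 + \<eta>)^(Suc m) = (f t * (1 + \<eta>)) * (1 + \<eta>)^m" by (simp add: algebra_simps)
  also have "\<dots> \<le> f (\<Lambda> * t) * (1 + \<eta>)^m" using step[OF Suc.prems(1) tTm] eta by (intro mult_right_mono) auto
  finally show ?case using IH by linarith
qed

lemma aux_frac: "(X::real) > 0 \<Longrightarrow> Y > 0 \<Longrightarrow> C > 0 \<Longrightarrow> (X / C) / ((C + 1) * (X * Y)) = 1 / (C * (C + 1) * Y)"
proof -
  assume a: "X > 0" "Y > 0" "C > 0"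
  then have b: "C + 1 > 0" by simp
  have "(X / C) / ((C + 1) * (X * Y)) = X / (X * (C * (C + 1) * Y))"
    by (simp add: mult.commute mult.left_commute)
  also have "\<dots> = 1 / (C * (C + 1) * Y)" using a b by simp
  finally show ?thesis .
qed

definition gam :: "real \<Rightarrow> real \<Rightarrow> nat \<Rightarrow> real" where
  "gam C e k = 5 * (c3 C e k)^2 / (128 * C powr (2/e))"
definition Lam :: "real \<Rightarrow> real \<Rightarrow> nat \<Rightarrow> real \<Rightarrow> real" where
  "Lam C e k K = 7 + 48 / gam C e k + 6 * K"
definition eta :: "real \<Rightarrow> real \<Rightarrow> nat \<Rightarrow> real \<Rightarrow> real" where
  "eta C e k K = 1 / (C * (C + 1) * (8 / gam C e k + K + 1) powr e)"
definition T0 :: "real \<Rightarrow> real \<Rightarrow> nat \<Rightarrow> real \<Rightarrow> real" where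
  "T0 C e k K = 1 + gam C e k + (12*K + 9*K^2) / gam C e k + 2*K"
definition Tmax :: "real \<Rightarrow> real \<Rightarrow> nat \<Rightarrow> real \<Rightarrow> nat \<Rightarrow> real" where
  "Tmax C e k K n = min (c3 C e k * n powr (1/e) / 2 - 2*K)
      ((gam C e k * (c3 C e k * n powr (1/e) / 4 - K) / 8 - 1) / 2)"

lemma gam_pos: assumes "C > 0" "k > 0" shows "gam C e k > 0"
proof -
  have "c3 C e k > 0" using c3_pos assms by blast
  then show ?thesis unfolding gam_def using assms by simp
qed

context kme begin

abbreviation "ga \<equiv> gam C e k"

lemma step2:
  assumes gh: "g<k" "h<k" "g\<noteq>h"
    and n1: "2*k \<le> n" and n2: "2*k \<le> n * amin C e (1/k)"
    and n3: "1 \<le> c1 C e k * n / 2" and n4: "2 * k \<le> n * amin C e (c1 C e k)"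
    and n5: "4 * K \<le> c3 C e k * n powr (1/e)"
    and t0: "T0 C e k K \<le> t" and tm: "t \<le> Tmax C e k K n"
  shows "card (Bd g h t) * (1 + eta C e k K) \<le> card (Bd g h (Lam C e k K * t))"
proof -
  define R where "R = n powr (1/e)"
  define D where "D = d (ms!g) (ms!h)"
  have npos: "n > 0" using n1 k2 by simp
  have K0: "0 \<le> K" using K_nonneg[OF npos] .
  have kpos: "k > 0" using k2 by simp
  have gp: "ga > 0" using gam_pos[OF Cpos kpos] .
  have c3p: "c3 C e k > 0" using c3_pos[OF Cpos kpos] .
  have Rpos: "R > 0" unfolding R_def using npos by simp
  have sep: "c3 C e k * R \<le> D" unfolding R_def D_def by (rule separation[OF n1 n2 n3 n4 gh])
  have DDm: "D \<le> Dm" unfolding D_def using diam ms_lt gh by auto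
  have Dm_R: "Dm = C powr (1/e) * R" unfolding R_def by (rule Dm_eq)
  have n5': "4 * K \<le> c3 C e k * R" using n5 unfolding R_def .
  have t1: "1 \<le> t" using t0 K0 gp unfolding T0_def
    by (smt (verit) divide_nonneg_pos zero_le_power2 mult_nonneg_nonneg)
  have tg: "ga \<le> t" using t0 K0 gp unfolding T0_def
    by (smt (verit) divide_nonneg_pos zero_le_power2 mult_nonneg_nonneg)
  have tK: "(12*K + 9*K^2) / ga \<le> t" using t0 K0 gp unfolding T0_def
    by (smt (verit) divide_nonneg_pos zero_le_power2 mult_nonneg_nonneg)
  have t2K: "2*K \<le> t" using t0 K0 gp unfolding T0_def
    by (smt (verit) divide_nonneg_pos zero_le_power2 mult_nonneg_nonneg)
  define Xq where "Xq = ga * (c3 C e k * R / 4 - K)"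
  have tm1: "t \<le> c3 C e k * R / 2 - 2*K" and tm2: "t \<le> (Xq / 8 - 1) / 2"
    using tm unfolding Tmax_def R_def Xq_def by auto
  have gam_le: "ga \<le> 5 * D^2 / (128 * Dm^2)"
  proof -
    have "(c3 C e k * R)^2 \<le> D^2" using sep c3p Rpos by (intro power_mono) auto
    then have "5 * (c3 C e k * R)^2 / (128 * Dm^2) \<le> 5 * D^2 / (128 * Dm^2)"
      by (intro divide_right_mono) auto
    moreover have "5 * (c3 C e k * R)^2 / (128 * Dm^2) = ga"
    proof -
      have "(C powr (1/e))^2 = C powr (2/e)" using Cpos by (simp add: powr_inv_sq)
      then show ?thesis unfolding Dm_R gam_def using Rpos Cpos by (simp add: power_mult_distrib)
    qed
    ultimately show ?thesis by simp
  qed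
  define s where "s = 8*(2*t+1)/ga"
  have A1: "t + 2*K \<le> D / 2" using tm1 sep by linarith
  have A2: "K \<le> D / 4" using n5' sep by linarith
  have A3: "K \<le> Dm" using A2 DDm K0 by linarith
  have A4: "s \<le> D/4 - K"
  proof -
    have "8*(2*t + 1) \<le> Xq" using tm2 by (simp add: field_simps)
    then have "s \<le> Xq / ga" unfolding s_def using gp by (simp add: divide_right_mono)
    also have "Xq / ga = c3 C e k * R / 4 - K" unfolding Xq_def using gp by simp
    finally show ?thesis using sep by linarith
  qed
  have s16: "16 * t / ga \<le> s" unfolding s_def using gp by (simp add: divide_right_mono)
  have A5: "1 \<le> s"
  proof -
    have "16 \<le> 16 * t / ga" using tg gp by (simp add: le_divide_eq)
    then show ?thesis using s16 by linarith
  qed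
  have gs: "ga^2 * s / 16 = ga * (2*t+1) / 2" unfolding s_def using gp by (simp add: power2_eq_square field_simps)
  have A6: "12*K + 9*K^2 \<le> ga^2 * s / 16"
  proof -
    have "12*K + 9*K^2 \<le> ga * t" using tK gp by (simp add: divide_le_eq mult.commute)
    also have "\<dots> \<le> ga * (2*t+1) / 2" using gp t1 by (simp add: field_simps)
    finally show ?thesis unfolding gs .
  qed
  have A7: "28*K \<le> ga * s" unfolding s_def using gp t2K K0 by (simp; linarith)
  note st = band_step[OF gh gp gam_le[unfolded D_def] t1 A1[unfolded D_def] A2[unfolded D_def] A3 A4[unfolded s_def D_def] A5[unfolded s_def] A6[unfolded s_def] A7[unfolded s_def]]
  define hh where "hh = 2*t+1"
  define \<rho> where "\<rho> = 8 / ga + K + 1"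
  define Q where "Q = 8*hh/ga + K + hh"
  have st': "card (Bd g h t) * (1 + (hh powr e / C) / max (C * Q powr e) 1) \<le> card (Bd g h (t + 2*Q))"
    using st unfolding hh_def Q_def D_def by simp
  have hh1: "1 \<le> hh" "hh \<le> 3*t" unfolding hh_def using t1 by auto
  have \<rho>1: "1 \<le> \<rho>" unfolding \<rho>_def using gp K0 by simp
  have KK: "K \<le> K * hh" using K0 hh1 mult_left_mono[of 1 hh K] by simp
  have Qle: "Q \<le> hh * \<rho>" unfolding Q_def \<rho>_def using KK by (simp add: algebra_simps)
  have "0 \<le> 8 * hh / ga" using hh1 gp by simp
  then have Q1: "1 \<le> Q" unfolding Q_def using hh1 K0 by linarith
  have e0: "0 \<le> e" using e1 by simp
  have Qe1: "1 \<le> Q powr e" using Q1 e0 by (rule ge_one_powr_ge_zero)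
  have Qe: "Q powr e \<le> hh powr e * \<rho> powr e"
  proof -
    have "Q powr e \<le> (hh * \<rho>) powr e" using Qle Q1 e0 by (intro powr_mono2) auto
    also have "\<dots> = hh powr e * \<rho> powr e" using hh1 \<rho>1 by (simp add: powr_mult)
    finally show ?thesis .
  qed
  have hpos: "0 < hh powr e" using hh1 by simp
  have rpos: "0 < \<rho> powr e" using \<rho>1 by simp
  have mx: "max (C * Q powr e) 1 \<le> (C + 1) * (hh powr e * \<rho> powr e)"
  proof -
    have "0 \<le> C * Q powr e" using Cpos by simp
    then have "max (C * Q powr e) 1 \<le> C * Q powr e + Q powr e" using Qe1 by simp
    also have "\<dots> = (C + 1) * Q powr e" by (simp add: algebra_simps)
    also have "\<dots> \<le> (C + 1) * (hh powr e * \<rho> powr e)" using Qe Cpos by (intro mult_left_mono) auto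
    finally show ?thesis .
  qed
  have eta_le: "eta C e k K \<le> (hh powr e / C) / max (C * Q powr e) 1"
  proof -
    have "(hh powr e / C) / ((C + 1) * (hh powr e * \<rho> powr e)) \<le> (hh powr e / C) / max (C * Q powr e) 1"
      using mx hpos Cpos by (intro divide_left_mono) auto
    moreover have "eta C e k K = 1 / (C * (C + 1) * \<rho> powr e)" unfolding eta_def \<rho>_def by simp
    moreover have "(hh powr e / C) / ((C + 1) * (hh powr e * \<rho> powr e)) = 1 / (C * (C + 1) * \<rho> powr e)"
      by (rule aux_frac[OF hpos rpos Cpos])
    ultimately show ?thesis by simp
  qed
  have tb: "t + 2*Q \<le> Lam C e k K * t"
  proof -
    have "2*Q \<le> 2 * (hh * \<rho>)" using Qle by simp
    also have "\<dots> \<le> 2 * (3 * t * \<rho>)" using hh1 \<rho>1 by (intro mult_left_mono mult_right_mono) auto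
    finally have "t + 2*Q \<le> t * (1 + 6 * \<rho>)" by (simp add: algebra_simps)
    also have "1 + 6 * \<rho> = Lam C e k K" unfolding Lam_def \<rho>_def by (simp add: algebra_simps)
    finally show ?thesis by (simp add: mult.commute)
  qed
  have "card (Bd g h t) * (1 + eta C e k K) \<le> card (Bd g h t) * (1 + (hh powr e / C) / max (C * Q powr e) 1)"
    using eta_le by (intro mult_left_mono) auto
  also have "\<dots> \<le> card (Bd g h (t + 2*Q))" by (rule st')
  also have "\<dots> \<le> card (Bd g h (Lam C e k K * t))" using tb Bd_fin by (simp add: card_mono Bd_mono)
  finally show ?thesis .
qed

end

context kme begin

lemma boundary:
  assumes n1: "2*k \<le> n" and n2: "2*k \<le> n * amin C e (1/k)"
    and n3: "1 \<le> c1 C e k * n / 2" and n4: "2 * k \<le> n * amin C e (c1 C e k)"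
    and n5: "4 * K \<le> c3 C e k * n powr (1/e)"
    and r: "0 \<le> r" and w: "w = max (2*r) (T0 C e k K)"
    and wm: "Lam C e k K ^ m * w \<le> Tmax C e k K n" and g: "g < k"
  shows "card {i\<in>Cl g. setdist d i ({..<n} - Cl g) \<le> r} * (1 + eta C e k K)^m \<le> (k - 1) * n"
proof -
  have npos: "n > 0" using n1 k2 by simp
  have K0: "0 \<le> K" using K_nonneg[OF npos] .
  have kpos: "k > 0" using k2 by simp
  have gp: "ga > 0" using gam_pos[OF Cpos kpos] .
  have Lam1: "1 \<le> Lam C e k K" unfolding Lam_def using gp K0 by simp
  have eta0: "0 \<le> eta C e k K" unfolding eta_def using Cpos by simp
  have T00: "0 \<le> T0 C e k K" unfolding T0_def using gp K0 by simp
  have iter: "card (Bd g h w) * (1 + eta C e k K)^m \<le> n" if h: "h < k" "h \<noteq> g" for h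
  proof -
    have "real (card (Bd g h w)) * (1 + eta C e k K)^m \<le> real n"
    proof (rule iterate_bound[where f="\<lambda>t. real (card (Bd g h t))" and Tlo="T0 C e k K" and Tm="Tmax C e k K n"])
      show "real (card (Bd g h t)) \<le> real n" for t
        using Bd_sub by (simp add: card_mono[of "{..<n}", simplified])
      show "1 \<le> Lam C e k K" by (rule Lam1)
      show "0 \<le> eta C e k K" by (rule eta0)
      show "real (card (Bd g h t)) * (1 + eta C e k K) \<le> real (card (Bd g h (Lam C e k K * t)))"
        if "T0 C e k K \<le> t" "t \<le> Tmax C e k K n" for t
        using step2[OF g h(1) h(2)[symmetric] n1 n2 n3 n4 n5 that] .
      show "0 \<le> real (card (Bd g h t))" for t by simp
      show "0 \<le> T0 C e k K" by (rule T00)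
      show "T0 C e k K \<le> w" unfolding w by simp
      show "Lam C e k K ^ m * w \<le> Tmax C e k K n" by (rule wm)
    qed
    then show ?thesis by simp
  qed
  define Bset where "Bset = {i\<in>Cl g. setdist d i ({..<n} - Cl g) \<le> r}"
  have sub: "Bset \<subseteq> (\<Union>h\<in>{..<k} - {g}. Bd g h w)"
  proof
    fix i assume "i \<in> Bset"
    then have iC: "i \<in> Cl g" and sd: "setdist d i ({..<n} - Cl g) \<le> r" unfolding Bset_def by auto
    have iN: "i < n" using iC Cl_sub[OF g] by auto
    define h0 where "h0 = (if g = 0 then 1 else 0::nat)"
    have h0: "h0 < k" "h0 \<noteq> g" unfolding h0_def using k2 g by auto
    have "ms ! h0 \<in> {..<n} - Cl g" using medoid_in[OF h0(1)] Cl_disj[OF g h0(1)] ms_lt[OF h0(1)] h0(2) by auto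
    then have ne: "{..<n} - Cl g \<noteq> {}" by blast
    have fin: "finite ({..<n} - Cl g)" by simp
    have "setdist d i ({..<n} - Cl g) = Min (d i ` ({..<n} - Cl g))"
      unfolding setdist_def using ne fin by (simp add: cInf_eq_Min)
    then have "Min (d i ` ({..<n} - Cl g)) \<le> r" using sd by simp
    then obtain j where j: "j \<in> {..<n} - Cl g" "d i j \<le> r" using ne fin by (auto simp: Min_le_iff)
    have jn: "j < n" using j by auto
    obtain h where h: "h < k" "j \<in> Cl h" using own[OF jn] by blast
    have hg: "h \<noteq> g" using h j by auto
    have p1: "d (ms ! g) i \<le> d (ms ! h) i" using near_le[OF g iC h(1)] .
    have p2: "d (ms ! h) j \<le> d (ms ! g) j" using near_le[OF h(1) h(2) g] .
    have mg: "ms ! g < n" and mh: "ms ! h < n" using ms_lt g h by auto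
    have "d (ms ! h) i \<le> d (ms ! h) j + d j i" using d_tri[OF mh jn iN] .
    moreover have "d (ms ! g) j \<le> d (ms ! g) i + d i j" using d_tri[OF mg iN jn] .
    moreover have "d j i = d i j" using d_sym jn iN by simp
    ultimately have "d (ms ! h) i - d (ms ! g) i \<le> 2 * r" using p2 j(2) by linarith
    then have "\<bar>phi g h i\<bar> \<le> w" unfolding phi_def w using p1 by simp
    then show "i \<in> (\<Union>h\<in>{..<k} - {g}. Bd g h w)" unfolding Bd_def using iN h(1) hg by auto
  qed
  have "card Bset \<le> card (\<Union>h\<in>{..<k} - {g}. Bd g h w)"
    using Bd_fin by (intro card_mono[OF _ sub]) auto
  also have "\<dots> \<le> (\<Sum>h\<in>{..<k} - {g}. card (Bd g h w))" by (rule card_UN_le) simp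
  finally have "real (card Bset) \<le> (\<Sum>h\<in>{..<k} - {g}. real (card (Bd g h w)))"
    by (metis of_nat_le_iff of_nat_sum)
  then have "card Bset * (1 + eta C e k K)^m \<le> (\<Sum>h\<in>{..<k} - {g}. real (card (Bd g h w))) * (1 + eta C e k K)^m"
    using eta0 by (intro mult_right_mono) auto
  also have "\<dots> = (\<Sum>h\<in>{..<k} - {g}. real (card (Bd g h w)) * (1 + eta C e k K)^m)"
    by (simp add: sum_distrib_right)
  also have "\<dots> \<le> (\<Sum>h\<in>{..<k} - {g}. real n)" using iter by (intro sum_mono) auto
  also have "\<dots> = (k - 1) * n" using g by (simp add: card_Diff_singleton)
  finally show ?thesis unfolding Bset_def by simp
qed

end

lemma powr_root_ge:
  assumes "x > 0" "a > 0" "x powr a \<le> real n"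
  shows "x \<le> real n powr (1/a)"
proof -
  have "(x powr a) powr (1/a) \<le> real n powr (1/a)" using assms by (intro powr_mono2) auto
  then show ?thesis using assms by (simp add: powr_powr)
qed

lemma delta_finite:
  fixes d :: "nat \<Rightarrow> nat \<Rightarrow> nat \<Rightarrow> real" and C :: real and \<delta> :: ereal
  assumes C_pos: "0 < C" and delta: "1 \<le> \<delta>"
    and ahlfors: "\<And>n. fin_ahlfors_regular {..<n} (d n) C \<delta>"
  shows "\<exists>e. \<delta> = ereal e \<and> 1 \<le> e"
proof (cases \<delta>)
  case (real r)
  then show ?thesis using delta by auto
next
  case MInf
  then show ?thesis using delta by auto
next
  case PInf
  define n where "n = nat \<lceil>C\<rceil> + 2"
  have n0: "0 < n" unfolding n_def by simp
  have nC: "max C 1 < real n" unfolding n_def by (simp add: max_def; linarith)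
  have AR: "min (ereal (real n)) (ereal (inverse C) * epow r \<delta>) \<le> ereal (real (card (mball {..<n} (d n) r 0))) \<and>
        ereal (real (card (mball {..<n} (d n) r 0))) \<le> max (ereal C * epow r \<delta>) 1" if "r > 0" for r
    using ahlfors[of n] n0 that unfolding fin_ahlfors_regular_def by auto
  have all: "mball {..<n} (d n) 1 0 = {..<n}"
  proof
    show "mball {..<n} (d n) 1 0 \<subseteq> {..<n}" unfolding mball_def by auto
    show "{..<n} \<subseteq> mball {..<n} (d n) 1 0"
    proof
      fix j assume j: "j \<in> {..<n}"
      show "j \<in> mball {..<n} (d n) 1 0"
      proof (rule ccontr)
        assume "j \<notin> mball {..<n} (d n) 1 0"
        then have dj: "d n 0 j > 1" using j unfolding mball_def by auto
        define r where "r = (1 + d n 0 j) / 2"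
        have r1: "r > 1" "r < d n 0 j" unfolding r_def using dj by auto
        have "epow r \<delta> = \<infinity>" unfolding epow_def PInf using r1 by simp
        moreover have "ereal (inverse C) * \<infinity> = \<infinity>" using C_pos by simp
        ultimately have "ereal (real n) \<le> ereal (real (card (mball {..<n} (d n) r 0)))"
          using AR[of r] r1 by simp
        then have "n \<le> card (mball {..<n} (d n) r 0)" by simp
        moreover have "mball {..<n} (d n) r 0 \<subseteq> {..<n}" unfolding mball_def by auto
        ultimately have "mball {..<n} (d n) r 0 = {..<n}"
          by (intro card_seteq) auto
        then have "d n 0 j \<le> r" using j unfolding mball_def by auto
        then show False using r1 by simp
      qed
    qed
  qed
  have "epow 1 \<delta> = 1" unfolding epow_def PInf by simp
  then have "ereal (real (card (mball {..<n} (d n) 1 0))) \<le> max (ereal C) 1" using AR[of 1] by simp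
  then have "real n \<le> max C 1" unfolding all by (simp add: max_def split: if_splits)
  then show ?thesis using nC by simp
qed

lemma setup_n:
  fixes d :: "nat \<Rightarrow> nat \<Rightarrow> real" and emb :: "nat \<Rightarrow> 'a::real_inner"
  assumes C_pos: "0 < C" and e1: "1 \<le> e" and metric: "fin_metric {..<n} d"
    and ahl: "fin_ahlfors_regular {..<n} d C (ereal e)"
    and embed: "coarse_isometry {..<n} d dist K emb"
    and interp: "\<And>i j a. i \<in> {..<n} \<Longrightarrow> j \<in> {..<n} \<Longrightarrow> 0 \<le> a \<Longrightarrow> a \<le> 1 \<Longrightarrow>
        \<exists>g\<in>{..<n}. \<bar>d i g - a * d i j\<bar> \<le> K \<and> \<bar>d g j - (1 - a) * d i j\<bar> \<le> K"
    and k2: "2 \<le> k" and kmed: "kmedoids_output d {..<n} k Cl"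
  shows "\<exists>ms. kme d n C e k ms Cl emb K"
proof -
  obtain ms where ms: "length ms = k" "distinct ms" "set ms \<subseteq> {..<n}" "nearest_assignment d {..<n} ms Cl"
     "\<forall>g<k. \<forall>p\<in>{..<n}. p \<notin> set ms \<longrightarrow> (\<Sum>j\<in>{..<n}. mcost d ms j) \<le> (\<Sum>j\<in>{..<n}. mcost d (ms[g:=p]) j)"
    using output_props[OF kmed _ ] k2 by fastforce
  have ep: "epow r (ereal e) = ereal (r powr e)" for r unfolding epow_def by simp
  have lo: "min (real n) (r powr e / C) \<le> card (mball {..<n} d r i)" if "i < n" "r > 0" for i r
  proof -
    have "min (ereal (real n)) (ereal (inverse C) * epow r (ereal e)) \<le> ereal (real (card (mball {..<n} d r i)))"
      using ahl that unfolding fin_ahlfors_regular_def by auto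
    then show ?thesis unfolding ep by (auto simp: divide_inverse mult.commute min_def split: if_splits)
  qed
  have hi: "card (mball {..<n} d r i) \<le> max (C * r powr e) 1" if "i < n" "r > 0" for i r
  proof -
    have "ereal (real (card (mball {..<n} d r i))) \<le> max (ereal C * epow r (ereal e)) 1"
      using ahl that unfolding fin_ahlfors_regular_def by auto
    also have "max (ereal C * epow r (ereal e)) 1 = ereal (max (C * r powr e) 1)"
      unfolding ep by (simp add: max_def)
    finally show ?thesis by (auto simp: max_def split: if_splits)
  qed
  have "kme d n C e k ms Cl emb K"
  proof (unfold_locales)
    show "fin_metric {..<n} d" by (rule metric)
    show "\<And>i r. i < n \<Longrightarrow> 0 < r \<Longrightarrow> min (real n) (r powr e / C) \<le> real (card (mball {..<n} d r i))" by (rule lo)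
    show "\<And>i r. i < n \<Longrightarrow> 0 < r \<Longrightarrow> real (card (mball {..<n} d r i)) \<le> max (C * r powr e) 1" by (rule hi)
    show "1 \<le> e" "0 < C" "2 \<le> k" using e1 C_pos k2 by auto
    show "length ms = k" "distinct ms" "set ms \<subseteq> {..<n}" "nearest_assignment d {..<n} ms Cl" using ms by auto
    show "\<And>g p. g < k \<Longrightarrow> p < n \<Longrightarrow> p \<notin> set ms \<Longrightarrow> (\<Sum>j<n. mcost d ms j) \<le> (\<Sum>j<n. mcost d (ms[g := p]) j)"
      using ms(5) by auto
    show "coarse_isometry {..<n} d dist K emb" by (rule embed)
    show "\<And>i j a. i < n \<Longrightarrow> j < n \<Longrightarrow> 0 \<le> a \<Longrightarrow> a \<le> 1 \<Longrightarrow>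
        \<exists>g\<in>{..<n}. \<bar>d i g - a * d i j\<bar> \<le> K \<and> \<bar>d g j - (1 - a) * d i j\<bar> \<le> K"
      using interp by auto
  qed
  then show ?thesis by blast
qed

lemma tmax_ok:
  fixes ga c3 A T K \<rho> B :: real
  assumes ga: "ga > 0" and c3: "c3 > 0" and A: "A \<ge> 0" and T: "T \<ge> 0" and r1: "\<rho> \<ge> 1"
    and B: "B = A*(2+T) + ga*\<bar>K\<bar>/16 + 1/2 + 2*\<bar>K\<bar>"
    and r0: "1 + 2*B/c3 + 64*B/(ga*c3) \<le> \<rho>"
  shows "A * max (2*\<rho>) T \<le> min (c3 * \<rho>^2/2 - 2*K) ((ga * (c3 * \<rho>^2/4 - K)/8 - 1)/2)"
proof -
  define Z where "Z = ga*\<bar>K\<bar>/16 + 1/2 + 2*\<bar>K\<bar>"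
  have Z0: "Z \<ge> 0" unfolding Z_def using ga by simp
  have B0: "B \<ge> 0" unfolding B using A T ga by simp
  have BZ: "B = A*(2+T) + Z" unfolding B Z_def by simp
  have "max (2*\<rho>) T \<le> (2+T)*\<rho>" using r1 T by (simp add: max_def algebra_simps) (smt (verit) mult_le_cancel_left1 mult.commute)
  then have h0: "A * max (2*\<rho>) T \<le> A*(2+T)*\<rho>" using A by (metis mult.assoc mult_left_mono)
  have "Z * 1 \<le> Z * \<rho>" using Z0 r1 by (intro mult_left_mono) auto
  then have h1: "A*(2+T)*\<rho> \<le> B*\<rho> - Z" unfolding BZ by (simp add: algebra_simps)
  have q1: "2*B/c3 \<le> \<rho>" "64*B/(ga*c3) \<le> \<rho>" using r0 B0 c3 ga by (smt (verit) divide_nonneg_pos mult_pos_pos)+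
  have "B \<le> c3*\<rho>/2" using q1(1) c3 by (simp add: divide_le_eq mult.commute)
  then have "B*\<rho> \<le> (c3*\<rho>/2)*\<rho>" using r1 by (intro mult_right_mono) auto
  then have h2: "B*\<rho> \<le> c3 * \<rho>^2/2" by (simp add: power2_eq_square)
  have "B \<le> ga*c3*\<rho>/64" using q1(2) c3 ga by (simp add: divide_le_eq mult.commute mult.left_commute)
  then have "B*\<rho> \<le> (ga*c3*\<rho>/64)*\<rho>" using r1 by (intro mult_right_mono) auto
  then have h3: "B*\<rho> \<le> ga*c3*\<rho>^2/64" by (simp add: power2_eq_square)
  have k1: "ga * K \<le> ga * \<bar>K\<bar>" using ga by (intro mult_left_mono) auto
  have e1: "A * max (2*\<rho>) T \<le> c3 * \<rho>^2/2 - 2*K" using h0 h1 h2 unfolding Z_def using ga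
    by (smt (verit) abs_ge_self mult_nonneg_nonneg divide_nonneg_pos abs_ge_zero)
  have e2: "A * max (2*\<rho>) T \<le> (ga * (c3 * \<rho>^2/4 - K)/8 - 1)/2"
  proof -
    have "(ga * (c3 * \<rho>^2/4 - K)/8 - 1)/2 = ga*c3*\<rho>^2/64 - ga*K/16 - 1/2" by (simp add: field_simps)
    then show ?thesis using h0 h1 h3 k1 abs_ge_zero[of K] unfolding Z_def by linarith
  qed
  show ?thesis using e1 e2 by simp
qed

lemma frac_aux2: "(nn::real) > 0 \<Longrightarrow> c > 0 \<Longrightarrow> P > 0 \<Longrightarrow> (X * nn / P) / (c * nn) = X / (c * P)"
  by (simp add: field_simps)

theorem theorem3:
  fixes d :: "nat \<Rightarrow> nat \<Rightarrow> nat \<Rightarrow> real"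
    and C :: real and \<delta> :: ereal and K :: real and k :: nat
    and Cl :: "nat \<Rightarrow> nat \<Rightarrow> nat set"
    and emb :: "nat \<Rightarrow> nat \<Rightarrow> 'e::euclidean_space"
  assumes C_pos: "0 < C"
    and delta: "1 \<le> \<delta>"
    and metric: "\<And>n. fin_metric {..<n} (d n)"
    and ahlfors: "\<And>n. fin_ahlfors_regular {..<n} (d n) C \<delta>"
    and embed: "\<And>n. coarse_isometry {..<n} (d n) dist K (emb n)"
    and interp: "\<And>n i j a. i \<in> {..<n} \<Longrightarrow> j \<in> {..<n} \<Longrightarrow> 0 \<le> a \<Longrightarrow> a \<le> 1 \<Longrightarrow>
        \<exists>g\<in>{..<n}. \<bar>d n i g - a * d n i j\<bar> \<le> K \<and> \<bar>d n g j - (1 - a) * d n i j\<bar> \<le> K"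
    and k2: "2 \<le> k"
    and kmed: "\<And>n. k \<le> n \<Longrightarrow> kmedoids_output (d n) {..<n} k (Cl n)"
  shows "(liminf (\<lambda>n. ereal (real (Min ((\<lambda>g. card (Cl n g)) ` {..<k}))
                          / real (Max ((\<lambda>g. card (Cl n g)) ` {..<k})))) > 0) \<and>
         (\<exists>rb :: nat \<Rightarrow> real. mono rb \<and> filterlim rb at_top sequentially \<and>
          ((\<lambda>n. real (Max ((\<lambda>g. card {i \<in> Cl n g. setdist (d n) i ({..<n} - Cl n g) \<le> rb n}) ` {..<k}))
                / real (Min ((\<lambda>g. card (Cl n g)) ` {..<k}))) \<longlonglongrightarrow> 0))"
proof -
  obtain e where de: "\<delta> = ereal e" and e1: "1 \<le> e" using delta_finite[OF C_pos delta ahlfors] by blast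
  have kpos: "k > 0" using k2 by simp
  have epos: "e > 0" using e1 by simp
  have K0: "0 \<le> K"
  proof -
    have "d 1 0 0 = 0" using metric[of 1] unfolding fin_metric_def by auto
    moreover have "d 1 0 0 \<le> dist (emb 1 0) (emb 1 0) + K" using embed[of 1] unfolding coarse_isometry_def by auto
    ultimately show ?thesis by simp
  qed
  have c1p: "c1 C e k > 0" using c1_pos C_pos kpos by blast
  have c3p: "c3 C e k > 0" using c3_pos C_pos kpos by blast
  have a1p: "amin C e (1/k) > 0" using amin_pos C_pos kpos by simp
  have a2p: "amin C e (c1 C e k) > 0" using amin_pos C_pos c1p by blast
  define x5 where "x5 = (\<bar>K\<bar> + 1) * 4 / c3 C e k"
  have x5p: "x5 > 0" unfolding x5_def using c3p by simp
  define Nb where "Nb = nat \<lceil>max (2*k) (max (2*k/amin C e (1/k)) (max (2/c1 C e k) (max (2*k/amin C e (c1 C e k)) (x5 powr e))))\<rceil>"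
  have good: "k \<le> n \<and> 2*k \<le> n \<and> 2*k \<le> n * amin C e (1/k) \<and> 1 \<le> c1 C e k * n / 2 \<and>
      2*k \<le> n * amin C e (c1 C e k) \<and> 4*K \<le> c3 C e k * n powr (1/e)" if n: "Nb \<le> n" for n
  proof -
    have "max (2*k) (max (2*k/amin C e (1/k)) (max (2/c1 C e k) (max (2*k/amin C e (c1 C e k)) (x5 powr e)))) \<le> real Nb"
      unfolding Nb_def by (rule real_nat_ceiling_ge)
    also have "\<dots> \<le> real n" using n by simp
    finally have m: "real (2*k) \<le> n" "2*k/amin C e (1/k) \<le> n" "2/c1 C e k \<le> n" "2*k/amin C e (c1 C e k) \<le> n" "x5 powr e \<le> n"
      by auto
    have i1: "k \<le> n" "2*k \<le> n" using m(1) by linarith+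
    have i2: "2*k \<le> n * amin C e (1/k)" using m(2) a1p by (simp add: pos_divide_le_eq)
    have i3: "1 \<le> c1 C e k * n / 2" using m(3) c1p by (simp add: pos_divide_le_eq mult.commute)
    have i4: "2*k \<le> n * amin C e (c1 C e k)" using m(4) a2p by (simp add: pos_divide_le_eq)
    have "x5 \<le> n powr (1/e)" using powr_root_ge[OF x5p epos m(5)] .
    then have "c3 C e k * x5 \<le> c3 C e k * n powr (1/e)" using c3p by (intro mult_left_mono) auto
    moreover have "c3 C e k * x5 = (\<bar>K\<bar> + 1) * 4" unfolding x5_def using c3p by simp
    moreover have "4*K \<le> (\<bar>K\<bar> + 1) * 4" by simp
    ultimately have i5: "4*K \<le> c3 C e k * n powr (1/e)" by (metis order_trans)
    show ?thesis using i1 i2 i3 i4 i5 by simp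
  qed
  have inst: "\<exists>ms. kme (d n) n C e k ms (Cl n) (emb n) K" if n: "Nb \<le> n" for n
  proof (rule setup_n[OF C_pos e1 metric[of n] _ embed[of n] _ k2 kmed])
    show "fin_ahlfors_regular {..<n} (d n) C (ereal e)" using ahlfors[of n] unfolding de .
    show "\<And>i j a. i \<in> {..<n} \<Longrightarrow> j \<in> {..<n} \<Longrightarrow> 0 \<le> a \<Longrightarrow> a \<le> 1 \<Longrightarrow>
        \<exists>g\<in>{..<n}. \<bar>d n i g - a * d n i j\<bar> \<le> K \<and> \<bar>d n g j - (1 - a) * d n i j\<bar> \<le> K" by (rule interp)
    show "k \<le> n" using good[OF n] by simp
  qed
  have minlb: "c1 C e k * n \<le> real (Min ((\<lambda>g. card (Cl n g)) ` {..<k}))" if n: "Nb \<le> n" for n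
  proof -
    obtain ms where kme: "kme (d n) n C e k ms (Cl n) (emb n) K" using inst[OF n] by blast
    have km: "km (d n) n C e k ms (Cl n)" using kme by (rule kme.axioms(1))
    have gd: "2*k \<le> n" "2*k \<le> n * amin C e (1/k)" using good[OF n] by auto
    have "0 \<in> {..<k}" using kpos by simp
    then have "Min ((\<lambda>g. card (Cl n g)) ` {..<k}) \<in> (\<lambda>g. card (Cl n g)) ` {..<k}" by (intro Min_in) auto
    then obtain g where g: "g < k" "Min ((\<lambda>g. card (Cl n g)) ` {..<k}) = card (Cl n g)" by auto
    show ?thesis unfolding g(2) using km.cluster_lb[OF km gd g(1)] .
  qed
  have maxub: "real (Max ((\<lambda>g. card (Cl n g)) ` {..<k})) \<le> n" if n: "Nb \<le> n" for n
  proof -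
    obtain ms where kme: "kme (d n) n C e k ms (Cl n) (emb n) K" using inst[OF n] by blast
    have km: "km (d n) n C e k ms (Cl n)" using kme by (rule kme.axioms(1))
    have "0 \<in> {..<k}" using kpos by simp
    then have "Max ((\<lambda>g. card (Cl n g)) ` {..<k}) \<in> (\<lambda>g. card (Cl n g)) ` {..<k}" by (intro Max_in) auto
    then obtain g where g: "g < k" "Max ((\<lambda>g. card (Cl n g)) ` {..<k}) = card (Cl n g)" by auto
    have "card (Cl n g) \<le> card {..<n}" using km.Cl_sub[OF km g(1)] by (intro card_mono) auto
    then show ?thesis unfolding g(2) by simp
  qed
  have part1: "c1 C e k \<le> real (Min ((\<lambda>g. card (Cl n g)) ` {..<k})) / real (Max ((\<lambda>g. card (Cl n g)) ` {..<k}))"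
    if n: "Nb \<le> n" for n
  proof -
    define mi where "mi = real (Min ((\<lambda>g. card (Cl n g)) ` {..<k}))"
    define ma where "ma = real (Max ((\<lambda>g. card (Cl n g)) ` {..<k}))"
    have npos: "n > 0" using good[OF n] kpos by simp
    have "0 \<in> {..<k}" using kpos by simp
    then have "Min ((\<lambda>g. card (Cl n g)) ` {..<k}) \<in> (\<lambda>g. card (Cl n g)) ` {..<k}" by (intro Min_in) auto
    then have "Min ((\<lambda>g. card (Cl n g)) ` {..<k}) \<le> Max ((\<lambda>g. card (Cl n g)) ` {..<k})"
      by (intro Max_ge) auto
    then have mima: "mi \<le> ma" unfolding mi_def ma_def by simp
    have l: "c1 C e k * n \<le> mi" unfolding mi_def by (rule minlb[OF n])
    have u: "ma \<le> n" unfolding ma_def by (rule maxub[OF n])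
    have cn: "0 < c1 C e k * n" using c1p npos by simp
    have map: "0 < ma" using l mima cn by linarith
    have "c1 C e k = (c1 C e k * n) / n" using npos by simp
    also have "\<dots> \<le> (c1 C e k * n) / ma" using u map cn by (intro divide_left_mono) auto
    also have "\<dots> \<le> mi / ma" using l map by (intro divide_right_mono) auto
    finally show ?thesis unfolding mi_def ma_def .
  qed
  have L1: "ereal (c1 C e k) \<le> liminf (\<lambda>n. ereal (real (Min ((\<lambda>g. card (Cl n g)) ` {..<k}))
                          / real (Max ((\<lambda>g. card (Cl n g)) ` {..<k}))))"
    by (rule Liminf_bounded) (use part1 in \<open>auto simp: eventually_sequentially\<close>)
  have P1: "liminf (\<lambda>n. ereal (real (Min ((\<lambda>g. card (Cl n g)) ` {..<k}))
                          / real (Max ((\<lambda>g. card (Cl n g)) ` {..<k})))) > 0"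
    using L1 c1p by (meson ereal_less(2) less_le_trans)
  define rb where "rb n = real n powr (1/(2*e))" for n :: nat
  have mono: "mono rb" unfolding mono_def rb_def using epos by (auto intro: powr_mono2)
  have lim: "filterlim rb at_top sequentially"
    unfolding filterlim_at_top
  proof
    fix Z :: real
    define z where "z = max Z 1"
    have zp: "z > 0" unfolding z_def by simp
    show "\<forall>\<^sub>F n in sequentially. Z \<le> rb n"
      unfolding eventually_sequentially
    proof (intro exI allI impI)
      fix n assume n: "nat \<lceil>z powr (2*e)\<rceil> \<le> n"
      have "z powr (2*e) \<le> real n" using n by (meson real_nat_ceiling_ge of_nat_le_iff order_trans)
      then have "z \<le> rb n" unfolding rb_def using powr_root_ge[OF zp _, of "2*e" n] epos by simp
      then show "Z \<le> rb n" unfolding z_def by simp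
    qed
  qed
  define ga where "ga = gam C e k"
  have gp: "ga > 0" unfolding ga_def using gam_pos[OF C_pos kpos] .
  define \<eta> where "\<eta> = eta C e k K"
  have etap: "\<eta> > 0"
  proof -
    have b: "8 / gam C e k + K + 1 > 0" using gp K0 unfolding ga_def by (simp add: add_pos_nonneg)
    then have "(8 / gam C e k + K + 1) powr e > 0" by simp
    then show ?thesis unfolding \<eta>_def eta_def using C_pos by simp
  qed
  have g48: "0 \<le> 48 / gam C e k" "0 \<le> (12*K + 9*K^2) / gam C e k" "0 \<le> gam C e k"
    using gp K0 unfolding ga_def by simp_all
  have Lam1: "1 \<le> Lam C e k K" unfolding Lam_def using g48 K0 by simp
  have T00: "0 \<le> T0 C e k K" unfolding T0_def using g48 K0 by simp
  have lim0: "(\<lambda>n. real (Max ((\<lambda>g. card {i \<in> Cl n g. setdist (d n) i ({..<n} - Cl n g) \<le> rb n}) ` {..<k}))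
                / real (Min ((\<lambda>g. card (Cl n g)) ` {..<k}))) \<longlonglongrightarrow> 0"
  proof (rule LIMSEQ_I)
    fix \<epsilon> :: real assume ep: "0 < \<epsilon>"
    obtain M where M: "(real k - 1) / (c1 C e k * \<epsilon>) < (1 + \<eta>)^M" using real_arch_pow[of "1 + \<eta>"] etap by auto
    define A where "A = Lam C e k K ^ M"
    have A0: "A \<ge> 0" unfolding A_def using Lam1 by simp
    define B where "B = A*(2 + T0 C e k K) + ga*\<bar>K\<bar>/16 + 1/2 + 2*\<bar>K\<bar>"
    define \<rho>0 where "\<rho>0 = 1 + 2*B/c3 C e k + 64*B/(ga*c3 C e k)"
    have B0: "B \<ge> 0" unfolding B_def using A0 T00 gp by simp
    have r0p: "\<rho>0 \<ge> 1" unfolding \<rho>0_def using B0 c3p gp by simp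
    define N2 where "N2 = nat \<lceil>\<rho>0 powr (2*e)\<rceil>"
    show "\<exists>no. \<forall>n\<ge>no. norm (real (Max ((\<lambda>g. card {i \<in> Cl n g. setdist (d n) i ({..<n} - Cl n g) \<le> rb n}) ` {..<k}))
                / real (Min ((\<lambda>g. card (Cl n g)) ` {..<k})) - 0) < \<epsilon>"
    proof (intro exI allI impI)
      fix n assume n: "max Nb N2 \<le> n"
      then have nb: "Nb \<le> n" and n2: "N2 \<le> n" by auto
      have gd: "k \<le> n" "2*k \<le> n" "2*k \<le> n * amin C e (1/k)" "1 \<le> c1 C e k * n / 2"
        "2*k \<le> n * amin C e (c1 C e k)" "4*K \<le> c3 C e k * n powr (1/e)" using good[OF nb] by auto
      have npos: "n > 0" using gd kpos by simp
      obtain ms where kme: "kme (d n) n C e k ms (Cl n) (emb n) K" using inst[OF nb] by blast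
      have "\<rho>0 powr (2*e) \<le> real n" using n2 unfolding N2_def by (meson real_nat_ceiling_ge of_nat_le_iff order_trans)
      then have rr: "\<rho>0 \<le> rb n" unfolding rb_def using powr_root_ge[of \<rho>0 "2*e" n] r0p epos by simp
      have r1: "1 \<le> rb n" using rr r0p by simp
      have R: "real n powr (1/e) = (rb n)^2" unfolding rb_def using npos by (simp add: powr_power)
      have tm: "A * max (2 * rb n) (T0 C e k K) \<le> Tmax C e k K n"
      proof -
        have "A * max (2 * rb n) (T0 C e k K) \<le> min (c3 C e k * (rb n)^2/2 - 2*K) ((ga * (c3 C e k * (rb n)^2/4 - K)/8 - 1)/2)"
          by (rule tmax_ok[OF gp c3p A0 T00 r1 B_def]) (use rr in \<open>simp add: \<rho>0_def\<close>)
        then show ?thesis unfolding Tmax_def R ga_def by simp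
      qed
      have bd: "card {i\<in>Cl n g. setdist (d n) i ({..<n} - Cl n g) \<le> rb n} * (1 + \<eta>)^M \<le> (k - 1) * n"
        if g: "g < k" for g
        using kme.boundary[OF kme gd(2) gd(3) gd(4) gd(5) gd(6) _ refl _ g, of "rb n" M] r1 tm
        unfolding A_def \<eta>_def by simp
      define ma where "ma = real (Max ((\<lambda>g. card {i \<in> Cl n g. setdist (d n) i ({..<n} - Cl n g) \<le> rb n}) ` {..<k}))"
      define mi where "mi = real (Min ((\<lambda>g. card (Cl n g)) ` {..<k}))"
      have "0 \<in> {..<k}" using kpos by simp
      then have "Max ((\<lambda>g. card {i \<in> Cl n g. setdist (d n) i ({..<n} - Cl n g) \<le> rb n}) ` {..<k})
          \<in> (\<lambda>g. card {i \<in> Cl n g. setdist (d n) i ({..<n} - Cl n g) \<le> rb n}) ` {..<k}" by (intro Max_in) auto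
      then obtain g where g: "g < k" "ma = card {i \<in> Cl n g. setdist (d n) i ({..<n} - Cl n g) \<le> rb n}"
        unfolding ma_def by auto
      have maub: "ma * (1 + \<eta>)^M \<le> (real k - 1) * n" using bd[OF g(1)] g(2) k2 by (simp add: of_nat_diff)
      have milb: "c1 C e k * n \<le> mi" unfolding mi_def by (rule minlb[OF nb])
      have cn: "0 < c1 C e k * n" using c1p npos by simp
      have mip: "0 < mi" using milb cn by linarith
      have ma0: "0 \<le> ma" unfolding ma_def by simp
      have pM: "0 < (1 + \<eta>)^M" using etap by simp
      have "ma / mi \<le> ma / (c1 C e k * n)" using milb cn ma0 by (intro divide_left_mono) auto
      also have "\<dots> \<le> ((real k - 1) * n / (1 + \<eta>)^M) / (c1 C e k * n)"
        using maub pM cn by (intro divide_right_mono) (auto simp: pos_le_divide_eq)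
      also have "\<dots> = (real k - 1) / (c1 C e k * (1 + \<eta>)^M)"
        by (rule frac_aux2) (use npos c1p pM in auto)
      also have "\<dots> < \<epsilon>"
      proof -
        have "(real k - 1) < (1 + \<eta>)^M * (c1 C e k * \<epsilon>)" using M c1p ep by (simp add: divide_less_eq)
        then show ?thesis using c1p pM by (simp add: divide_less_eq mult.commute mult.left_commute)
      qed
      finally have "ma / mi < \<epsilon>" .
      moreover have "0 \<le> ma / mi" using ma0 mip by simp
      ultimately show "norm (real (Max ((\<lambda>g. card {i \<in> Cl n g. setdist (d n) i ({..<n} - Cl n g) \<le> rb n}) ` {..<k}))
                / real (Min ((\<lambda>g. card (Cl n g)) ` {..<k})) - 0) < \<epsilon>"
        unfolding ma_def[symmetric] mi_def[symmetric] by simp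
    qed
  qed
  show ?thesis using P1 mono lim lim0 by blast
qed

end
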